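(* Let $n>2$ be odd, let $\zeta\in\bar{\mathbb Q}$ be a primitive $n$-th root of unity, let $c$ be a positive rational number such that $x^n-c$ is irreducible over $\mathbb Q$, and let $a=c^{1/n}$ be the positive real root of $x^n-c$. Let $l$ be a positive divisor of $n$, $L=\mathbb Q(a)$ and $M=\mathbb Q(a,\zeta^l)$. Then $\rho_{\mathbb Q}(M,L)=n/l$ and $\tau_{\mathbb Q}(M,L)=l$; in particular $\tau_{\mathbb Q}(M,L)\,\rho_{\mathbb Q}(M,L)=[L:\mathbb Q]$.
   Context: For finite extensions $L/K$, $M/K$ inside a fixed algebraic closure: writing $L=K(\alpha)$ with minimal polynomial $f$ of $\alpha$ over $K$, the root capacity $\rho_K(M,L)$ is the number of roots of $f$ lying in $M$ (independent of the choice of $\alpha$). If $L_1,\dots,L_a$ are all the distinct subfields of $M$ isomorphic to $L$ over $K$, the intersection indicium is $\tau_K(M,L)=[L_1\cap\cdots\cap L_a:K]$ if $a\ge1$ and $0$ if $a=0$. *)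

theory Defs
  imports Complex_Main "HOL-Computational_Algebra.Polynomial"
begin

text \<open>The fixed algebraic closure of Q is realised inside the complex numbers.
  Subfields of C (they automatically contain Q).\<close>

definition subfield_C :: "complex set \<Rightarrow> bool" where
  "subfield_C F \<longleftrightarrow> 0 \<in> F \<and> 1 \<in> F \<and>
     (\<forall>x\<in>F. \<forall>y\<in>F. x + y \<in> F \<and> x * y \<in> F) \<and>
     (\<forall>x\<in>F. - x \<in> F) \<and> (\<forall>x\<in>F. x \<noteq> 0 \<longrightarrow> inverse x \<in> F)"

definition gen_field :: "complex set \<Rightarrow> complex set" where
  "gen_field S = \<Inter> {F. subfield_C F \<and> S \<subseteq> F}"

text \<open>Degree [F:Q] = dimension of F as a Q-vector space (0 if not finite-dimensional).\<close>
definition rat_indep :: "complex set \<Rightarrow> bool" where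
  "rat_indep B \<longleftrightarrow> (\<forall>c :: complex \<Rightarrow> rat.
      (\<Sum>b\<in>B. of_rat (c b) * b) = 0 \<longrightarrow> (\<forall>b\<in>B. c b = 0))"

definition rat_basis :: "complex set \<Rightarrow> complex set \<Rightarrow> bool" where
  "rat_basis F B \<longleftrightarrow> finite B \<and> B \<subseteq> F \<and> rat_indep B \<and>
      (\<forall>x\<in>F. \<exists>c :: complex \<Rightarrow> rat. x = (\<Sum>b\<in>B. of_rat (c b) * b))"

definition ext_degree :: "complex set \<Rightarrow> nat" where
  "ext_degree F = (if \<exists>B. rat_basis F B then card (SOME B. rat_basis F B) else 0)"

definition min_poly :: "complex \<Rightarrow> rat poly" where
  "min_poly \<alpha> = (SOME p. p \<noteq> 0 \<and> lead_coeff p = 1 \<and> poly (map_poly of_rat p) \<alpha> = 0 \<and>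
       (\<forall>q. q \<noteq> 0 \<and> poly (map_poly of_rat q) \<alpha> = 0 \<longrightarrow> degree p \<le> degree q))"

definition root_capacity :: "complex set \<Rightarrow> complex set \<Rightarrow> nat" where
  "root_capacity M L =
     (let \<alpha> = (SOME \<alpha>. L = gen_field {\<alpha>})
      in card {x \<in> M. poly (map_poly of_rat (min_poly \<alpha>)) x = 0})"

definition iso_over_Q :: "complex set \<Rightarrow> complex set \<Rightarrow> bool" where
  "iso_over_Q L L' \<longleftrightarrow> (\<exists>\<phi>. bij_betw \<phi> L L' \<and>
      (\<forall>x\<in>L. \<forall>y\<in>L. \<phi> (x + y) = \<phi> x + \<phi> y \<and> \<phi> (x * y) = \<phi> x * \<phi> y) \<and>
      (\<forall>r. \<phi> (of_rat r) = of_rat r))"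

definition intersection_indicium :: "complex set \<Rightarrow> complex set \<Rightarrow> nat" where
  "intersection_indicium M L =
     (let Ls = {L'. subfield_C L' \<and> L' \<subseteq> M \<and> iso_over_Q L L'}
      in if Ls = {} then 0 else ext_degree (\<Inter> Ls))"

end

theory Submission
  imports Defs "HOL-Computational_Algebra.Computational_Algebra" "HOL-Computational_Algebra.Field_as_Ring"
begin

interpretation Q: vector_space "\<lambda>(r::rat) (x::complex). of_rat r * x"
  by unfold_locales (auto simp: algebra_simps of_rat_add of_rat_mult)

abbreviation cp :: "rat poly \<Rightarrow> complex poly" where "cp \<equiv> map_poly of_rat"

lemma coeff_cp[simp]: "coeff (cp p) i = of_rat (coeff p i)"
  by (simp add: coeff_map_poly)

lemma cp_add[simp]: "cp (p + q) = cp p + cp q"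
  by (rule poly_eqI) (simp add: of_rat_add)
lemma cp_diff[simp]: "cp (p - q) = cp p - cp q"
  by (rule poly_eqI) (simp add: of_rat_diff)
lemma cp_uminus[simp]: "cp (- p) = - cp p"
  by (rule poly_eqI) (simp add: of_rat_minus)
lemma cp_smult[simp]: "cp (smult r p) = smult (of_rat r) (cp p)"
  by (rule poly_eqI) (simp add: of_rat_mult)
lemma cp_pCons[simp]: "cp (pCons r p) = pCons (of_rat r) (cp p)"
  by (simp add: map_poly_pCons)
lemma cp_const[simp]: "cp [:r:] = [:of_rat r:]"
  by simp
lemma cp_monom[simp]: "cp (monom r k) = monom (of_rat r) k"
  by (simp add: map_poly_monom)
lemma cp_1[simp]: "cp 1 = 1"
  by simp
lemma cp_mult[simp]: "cp (p * q) = cp p * cp q"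
  by (induction p) (simp_all add: algebra_simps)
lemma cp_power[simp]: "cp (p ^ k) = cp p ^ k"
  by (induction k) simp_all
lemma cp_pcompose[simp]: "cp (pcompose p q) = pcompose (cp p) (cp q)"
  by (induction p) (simp_all add: pcompose_pCons)
lemma cp_sum[simp]: "cp (sum f A) = (\<Sum>x\<in>A. cp (f x))"
  by (induction A rule: infinite_finite_induct) simp_all
lemma cp_eq_iff[simp]: "cp p = cp q \<longleftrightarrow> p = q"
  by (auto simp: poly_eq_iff)
lemma cp_eq_0_iff[simp]: "cp p = 0 \<longleftrightarrow> p = 0"
  using cp_eq_iff[of p 0] by simp
lemma degree_cp[simp]: "degree (cp p) = degree p"
  by (simp add: degree_map_poly)
lemma lead_coeff_cp[simp]: "lead_coeff (cp p) = of_rat (lead_coeff p)"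
  by simp
lemma cp_dvd: "p dvd q \<Longrightarrow> cp p dvd cp q"
  by (auto elim!: dvdE)

lemma subfield_UNIV: "subfield_C UNIV" by (simp add: subfield_C_def)

lemma sf_0: "subfield_C F \<Longrightarrow> 0 \<in> F" by (simp add: subfield_C_def)
lemma sf_1: "subfield_C F \<Longrightarrow> 1 \<in> F" by (simp add: subfield_C_def)
lemma sf_add: "subfield_C F \<Longrightarrow> x \<in> F \<Longrightarrow> y \<in> F \<Longrightarrow> x + y \<in> F" by (simp add: subfield_C_def)
lemma sf_mult: "subfield_C F \<Longrightarrow> x \<in> F \<Longrightarrow> y \<in> F \<Longrightarrow> x * y \<in> F" by (simp add: subfield_C_def)
lemma sf_uminus: "subfield_C F \<Longrightarrow> x \<in> F \<Longrightarrow> - x \<in> F" by (simp add: subfield_C_def)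
lemma sf_inverse: "subfield_C F \<Longrightarrow> x \<in> F \<Longrightarrow> inverse x \<in> F"
  by (cases "x = 0") (auto simp add: subfield_C_def)
lemma sf_diff: "subfield_C F \<Longrightarrow> x \<in> F \<Longrightarrow> y \<in> F \<Longrightarrow> x - y \<in> F"
  using sf_add[of F x "-y"] sf_uminus[of F y] by simp
lemma sf_divide: "subfield_C F \<Longrightarrow> x \<in> F \<Longrightarrow> y \<in> F \<Longrightarrow> x / y \<in> F"
  by (simp add: divide_inverse sf_mult sf_inverse)
lemma sf_power: "subfield_C F \<Longrightarrow> x \<in> F \<Longrightarrow> x ^ k \<in> F"
  by (induction k) (auto intro: sf_1 sf_mult)
lemma sf_of_nat: "subfield_C F \<Longrightarrow> of_nat k \<in> F"
  by (induction k) (auto intro: sf_0 sf_1 sf_add)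
lemma sf_of_int: "subfield_C F \<Longrightarrow> of_int k \<in> F"
proof -
  assume F: "subfield_C F"
  show ?thesis
  proof (cases "k \<ge> 0")
    case True
    then show ?thesis using sf_of_nat[OF F, of "nat k"] by simp
  next
    case False
    then show ?thesis using sf_uminus[OF F sf_of_nat[OF F, of "nat (-k)"]] by simp
  qed
qed
lemma sf_of_rat: "subfield_C F \<Longrightarrow> of_rat r \<in> F"
proof -
  assume F: "subfield_C F"
  obtain a b where r: "r = Rat.Fract a b" "b \<noteq> 0" by (cases r) auto
  have "of_rat r = (of_int a / of_int b :: complex)"
    by (simp add: r of_rat_rat)
  then show ?thesis using sf_divide[OF F sf_of_int[OF F] sf_of_int[OF F]] by simp
qed
lemma sf_sum: "subfield_C F \<Longrightarrow> (\<And>i. i \<in> A \<Longrightarrow> f i \<in> F) \<Longrightarrow> sum f A \<in> F"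
  by (induction A rule: infinite_finite_induct) (auto intro: sf_0 sf_add)
lemma sf_prod: "subfield_C F \<Longrightarrow> (\<And>i. i \<in> A \<Longrightarrow> f i \<in> F) \<Longrightarrow> prod f A \<in> F"
  by (induction A rule: infinite_finite_induct) (auto intro: sf_1 sf_mult)
lemma sf_poly: "subfield_C F \<Longrightarrow> x \<in> F \<Longrightarrow> poly (cp p) x \<in> F"
  by (induction p) (auto intro: sf_add sf_mult sf_of_rat sf_0)
lemma sf_span: "subfield_C F \<Longrightarrow> B \<subseteq> F \<Longrightarrow> Q.span B \<subseteq> F"
  by (rule Q.span_minimal) (auto simp: Q.subspace_def intro: sf_0 sf_add sf_mult sf_of_rat)
lemma cnj_of_rat[simp]: "cnj (of_rat r) = of_rat r"
proof -
  obtain a b where r: "r = Rat.Fract a b" "b \<noteq> 0" by (cases r) auto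
  then show ?thesis by (simp add: of_rat_rat)
qed
lemma poly_cp_cnj: "poly (cp p) (cnj x) = cnj (poly (cp p) x)"
  by (induction p) auto

lemma gen_field_subfield: "subfield_C (gen_field S)"
  unfolding gen_field_def subfield_C_def by blast
lemma gen_field_sub: "S \<subseteq> gen_field S"
  unfolding gen_field_def by blast
lemma gen_field_least: "subfield_C F \<Longrightarrow> S \<subseteq> F \<Longrightarrow> gen_field S \<subseteq> F"
  unfolding gen_field_def by blast

subsection \<open>Spans that are closed under multiplication\<close>

lemma span_mult_closed:
  assumes B: "\<And>b b'. b \<in> B \<Longrightarrow> b' \<in> B \<Longrightarrow> b * b' \<in> Q.span B"
    and x: "x \<in> Q.span B" and y: "y \<in> Q.span B"
  shows "x * y \<in> Q.span B"
proof -
  have 1: "b * z \<in> Q.span B" if b: "b \<in> B" and z: "z \<in> Q.span B" for b z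
    using z
  proof (induction rule: Q.span_induct_alt)
    case base then show ?case by (simp add: Q.span_zero)
  next
    case (step c u w)
    have "b * (of_rat c * u + w) = of_rat c * (b * u) + b * w" by (simp add: algebra_simps)
    then show ?case using step B[OF b step(1)] by (simp add: Q.span_add Q.span_scale)
  qed
  show ?thesis using x
  proof (induction rule: Q.span_induct_alt)
    case base then show ?case by (simp add: Q.span_zero)
  next
    case (step c u w)
    have "(of_rat c * u + w) * y = of_rat c * (u * y) + w * y" by (simp add: algebra_simps)
    then show ?case using step 1[OF step(1) y] by (simp add: Q.span_add Q.span_scale)
  qed
qed

lemma poly_in_closed:
  assumes "1 \<in> V" "\<And>x z. x \<in> V \<Longrightarrow> z \<in> V \<Longrightarrow> x + z \<in> V" "\<And>x z. x \<in> V \<Longrightarrow> z \<in> V \<Longrightarrow> x * z \<in> V"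
    "\<And>r x. x \<in> V \<Longrightarrow> of_rat r * x \<in> V" "y \<in> V"
  shows "poly (cp p) y \<in> V"
proof (induction p)
  case 0
  then show ?case using assms(4)[of 1 0] assms(1) by simp
next
  case (pCons a p)
  then show ?case using assms assms(4)[of 1 a] by auto
qed

lemma inverse_in_closed:
  assumes V: "1 \<in> V" "\<And>x z. x \<in> V \<Longrightarrow> z \<in> V \<Longrightarrow> x + z \<in> V" "\<And>x z. x \<in> V \<Longrightarrow> z \<in> V \<Longrightarrow> x * z \<in> V"
    "\<And>r x. x \<in> V \<Longrightarrow> of_rat r * x \<in> V" "y \<in> V"
    and y0: "y \<noteq> 0" and p: "p \<noteq> 0" "poly (cp p) y = 0"
  shows "inverse y \<in> V"
  using p
proof (induction p)
  case 0
  then show ?case by simp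
next
  case (pCons a p)
  show ?case
  proof (cases "a = 0")
    case True
    then have "p \<noteq> 0" "poly (cp p) y = 0" using pCons y0 by auto
    then show ?thesis using pCons by blast
  next
    case False
    have eq: "of_rat a + y * poly (cp p) y = 0" using pCons by simp
    have "y * (of_rat (- inverse a) * poly (cp p) y) = - (of_rat (inverse a)) * (y * poly (cp p) y)"
      by (simp add: of_rat_minus)
    also have "y * poly (cp p) y = - of_rat a" using eq by (simp add: eq_neg_iff_add_eq_0 add.commute)
    also have "- (of_rat (inverse a)) * (- of_rat a) = (1::complex)"
      using False by (simp add: of_rat_inverse)
    finally have iv: "inverse y = of_rat (- inverse a) * poly (cp p) y"
      using y0 by (simp add: inverse_unique)
    have "of_rat (- inverse a) * poly (cp p) y \<in> V" by (rule V(4)[OF poly_in_closed[OF V]])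
    then show ?thesis by (simp only: iv)
  qed
qed

lemma algebraic_in_span:
  assumes fin: "finite B" and one: "1 \<in> Q.span B"
    and B: "\<And>b b'. b \<in> B \<Longrightarrow> b' \<in> B \<Longrightarrow> b * b' \<in> Q.span B"
    and y: "y \<in> Q.span B"
  shows "\<exists>p. p \<noteq> 0 \<and> poly (cp p) y = 0"
proof -
  let ?K = "card B"
  have pw: "y ^ i \<in> Q.span B" for i
    by (induction i) (auto simp: one span_mult_closed[OF B y])
  show ?thesis
  proof (cases "inj_on (\<lambda>i. y ^ i) {..?K}")
    case False
    then obtain i j where ij: "i \<le> ?K" "j \<le> ?K" "i \<noteq> j" "y ^ i = y ^ j"
      unfolding inj_on_def by auto
    define p :: "rat poly" where "p = monom 1 i - monom 1 j"
    have "coeff p i = 1" using ij by (simp add: p_def coeff_monom)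
    then have "p \<noteq> 0" by auto
    moreover have "poly (cp p) y = 0" using ij by (simp add: p_def poly_monom)
    ultimately show ?thesis by blast
  next
    case True
    define S where "S = (\<lambda>i. y ^ i) ` {..?K}"
    have cS: "card S = ?K + 1" using True by (simp add: S_def card_image)
    have "S \<subseteq> Q.span B" using pw by (auto simp: S_def)
    then have "Q.dependent S"
      using Q.independent_span_bound[OF fin, of S] cS by auto
    then obtain u where u: "\<exists>v\<in>S. u v \<noteq> 0" "(\<Sum>v\<in>S. of_rat (u v) * v) = 0"
      using Q.dependent_finite[of S] by (auto simp: S_def)
    define p :: "rat poly" where "p = (\<Sum>i\<le>?K. monom (u (y ^ i)) i)"
    have "poly (cp p) y = (\<Sum>i\<le>?K. of_rat (u (y ^ i)) * y ^ i)"
      by (simp add: p_def poly_sum poly_monom)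
    also have "\<dots> = (\<Sum>v\<in>S. of_rat (u v) * v)"
      unfolding S_def by (subst sum.reindex[OF True]) simp
    finally have "poly (cp p) y = 0" using u by simp
    moreover obtain i0 where i0: "i0 \<le> ?K" "u (y ^ i0) \<noteq> 0" using u(1) by (auto simp: S_def)
    have "coeff p i0 = u (y ^ i0)"
      using i0 by (simp add: p_def coeff_sum coeff_monom)
    then have "p \<noteq> 0" using i0 by auto
    ultimately show ?thesis by blast
  qed
qed

lemma span_subfield:
  assumes fin: "finite B" and one: "1 \<in> Q.span B"
    and B: "\<And>b b'. b \<in> B \<Longrightarrow> b' \<in> B \<Longrightarrow> b * b' \<in> Q.span B"
  shows "subfield_C (Q.span B)"
proof -
  have cl: "1 \<in> Q.span B" "\<And>x z. x \<in> Q.span B \<Longrightarrow> z \<in> Q.span B \<Longrightarrow> x + z \<in> Q.span B"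
    "\<And>x z. x \<in> Q.span B \<Longrightarrow> z \<in> Q.span B \<Longrightarrow> x * z \<in> Q.span B"
    "\<And>r x. x \<in> Q.span B \<Longrightarrow> of_rat r * x \<in> Q.span B"
    using one by (auto intro: Q.span_add Q.span_scale span_mult_closed[OF B])
  show ?thesis
    unfolding subfield_C_def
  proof (intro conjI ballI impI)
    fix y assume y: "y \<in> Q.span B" "y \<noteq> 0"
    obtain p where "p \<noteq> 0" "poly (cp p) y = 0" using algebraic_in_span[OF fin one B y(1)] by blast
    then show "inverse y \<in> Q.span B" using inverse_in_closed[OF cl y(1) y(2)] by blast
  next
    show "0 \<in> Q.span B" by (rule Q.span_zero)
  next
    show "1 \<in> Q.span B" by (rule one)
  next
    fix x y assume "x \<in> Q.span B" "y \<in> Q.span B"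
    then show "x + y \<in> Q.span B" "x * y \<in> Q.span B" using cl by blast+
  next
    fix x assume "x \<in> Q.span B"
    then show "- x \<in> Q.span B" by (rule Q.span_neg)
  qed
qed

lemma rat_indep_iff: "finite B \<Longrightarrow> rat_indep B \<longleftrightarrow> Q.independent B"
  unfolding rat_indep_def using Q.dependent_finite[of B] by auto

lemma ext_degree_eq:
  assumes fin: "finite B" and sub: "B \<subseteq> F" and sp: "F \<subseteq> Q.span B" and ind: "Q.independent B"
  shows "ext_degree F = card B"
proof -
  have rb: "rat_basis F B"
    unfolding rat_basis_def
  proof (intro conjI ballI)
    show "rat_indep B" using rat_indep_iff[OF fin] ind by simp
    fix x assume "x \<in> F"
    then have "x \<in> range (\<lambda>u. \<Sum>v\<in>B. of_rat (u v) * v)" using sp Q.span_finite[OF fin] by auto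
    then show "\<exists>c. x = (\<Sum>b\<in>B. of_rat (c b) * b)" by auto
  qed (use fin sub in auto)
  define B' where "B' = (SOME B. rat_basis F B)"
  have rb': "rat_basis F B'" unfolding B'_def by (rule someI[of _ B]) (rule rb)
  then have fin': "finite B'" and sub': "B' \<subseteq> F" and ind': "Q.independent B'"
    and sp': "\<forall>x\<in>F. \<exists>c. x = (\<Sum>b\<in>B'. of_rat (c b) * b)"
    unfolding rat_basis_def using rat_indep_iff by auto
  have "F \<subseteq> Q.span B'"
  proof
    fix x assume "x \<in> F"
    then obtain c where "x = (\<Sum>b\<in>B'. of_rat (c b) * b)" using sp' by auto
    then show "x \<in> Q.span B'" using Q.span_finite[OF fin'] by auto
  qed
  then have "card B' = Q.dim F" using Q.basis_card_eq_dim[OF sub' _ ind'] by simp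
  moreover have "card B = Q.dim F" using Q.basis_card_eq_dim[OF sub sp ind] .
  ultimately have "card B' = card B" by simp
  moreover have "ext_degree F = card B'"
    unfolding ext_degree_def B'_def using rb by auto
  ultimately show ?thesis by simp
qed

subsection \<open>Simple extensions by roots of irreducible polynomials\<close>

definition Qa :: "complex \<Rightarrow> complex set" where
  "Qa \<alpha> = range (\<lambda>p. poly (cp p) \<alpha>)"

lemma Qa_poly[intro]: "poly (cp p) \<alpha> \<in> Qa \<alpha>"
  unfolding Qa_def by auto

lemma Qa_gen[intro]: "\<alpha> \<in> Qa \<alpha>"
  using Qa_poly[of "[:0,1:]" \<alpha>] by simp

lemma Qa_power[intro]: "\<alpha> ^ k \<in> Qa \<alpha>"
  using Qa_poly[of "monom 1 k" \<alpha>] by (simp add: poly_monom)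

lemma Qa_of_rat[intro]: "of_rat r \<in> Qa \<alpha>"
  using Qa_poly[of "[:r:]" \<alpha>] by simp

lemma irr_root_dvd:
  assumes irr: "irreducible (X :: rat poly)" and root: "poly (cp X) \<alpha> = 0"
  shows "poly (cp p) \<alpha> = 0 \<longleftrightarrow> X dvd p"
proof
  assume "X dvd p"
  then obtain k where "p = X * k" by (elim dvdE)
  then show "poly (cp p) \<alpha> = 0" using root by simp
next
  assume p: "poly (cp p) \<alpha> = 0"
  show "X dvd p"
  proof (rule ccontr)
    assume "\<not> X dvd p"
    then have "coprime X p" using field_poly_irreducible_imp_prime[OF irr] prime_elem_imp_coprime by blast
    then have g: "gcd X p = 1" by simp
    obtain u v where "bezout_coefficients X p = (u, v)" by (cases "bezout_coefficients X p")
    then have "u * X + v * p = gcd X p" by (rule bezout_coefficients)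
    then have "u * X + v * p = 1" using g by simp
    then have "poly (cp (u * X + v * p)) \<alpha> = 1" by simp
    then show False using root p by simp
  qed
qed

lemma Qa_subfield:
  assumes irr: "irreducible (X :: rat poly)" and root: "poly (cp X) \<alpha> = 0"
  shows "subfield_C (Qa \<alpha>)"
  unfolding subfield_C_def
proof (intro conjI ballI impI)
  show "0 \<in> Qa \<alpha>" using Qa_of_rat[of 0] by simp
  show "1 \<in> Qa \<alpha>" using Qa_of_rat[of 1] by simp
  fix x assume "x \<in> Qa \<alpha>"
  then obtain p where x: "x = poly (cp p) \<alpha>" by (auto simp: Qa_def)
  show "- x \<in> Qa \<alpha>" using Qa_poly[of "-p"] x by simp
  {
    fix y assume "y \<in> Qa \<alpha>"
    then obtain q where y: "y = poly (cp q) \<alpha>" by (auto simp: Qa_def)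
    show "x + y \<in> Qa \<alpha>" "x * y \<in> Qa \<alpha>" using Qa_poly[of "p + q"] Qa_poly[of "p * q"] x y by auto
  }
  assume x0: "x \<noteq> 0"
  then have "\<not> X dvd p" using irr_root_dvd[OF irr root, of p] x by simp
  then have "coprime X p" using field_poly_irreducible_imp_prime[OF irr] prime_elem_imp_coprime by blast
  then have g: "gcd X p = 1" by simp
  obtain u v where "bezout_coefficients X p = (u, v)" by (cases "bezout_coefficients X p")
  then have "u * X + v * p = gcd X p" by (rule bezout_coefficients)
  then have "u * X + v * p = 1" using g by simp
  then have "poly (cp (u * X + v * p)) \<alpha> = 1" by simp
  then have "poly (cp v) \<alpha> * x = 1" using root x by simp
  then have "x * poly (cp v) \<alpha> = 1" by (simp add: mult.commute)
  then have "inverse x = poly (cp v) \<alpha>" by (rule inverse_unique)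
  then show "inverse x \<in> Qa \<alpha>" by auto
qed

lemma gen_field_single:
  assumes irr: "irreducible (X :: rat poly)" and root: "poly (cp X) \<alpha> = 0"
  shows "gen_field {\<alpha>} = Qa \<alpha>"
proof
  show "gen_field {\<alpha>} \<subseteq> Qa \<alpha>" by (rule gen_field_least[OF Qa_subfield[OF irr root]]) auto
  show "Qa \<alpha> \<subseteq> gen_field {\<alpha>}"
    unfolding Qa_def using sf_poly[OF gen_field_subfield, of \<alpha> "{\<alpha>}"] gen_field_sub[of "{\<alpha>}"] by auto
qed

lemma poly_as_sum_lt:
  fixes p :: "complex poly"
  assumes "degree p < d \<or> p = 0"
  shows "poly p x = (\<Sum>i<d. coeff p i * x ^ i)"
proof -
  have "poly p x = (\<Sum>i\<le>degree p. coeff p i * x ^ i)" by (rule poly_altdef)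
  also have "\<dots> = (\<Sum>i<d. coeff p i * x ^ i)"
  proof (cases "p = 0")
    case True
    then show ?thesis by simp
  next
    case False
    then have dp: "degree p < d" using assms by auto
    show ?thesis
      by (rule sum.mono_neutral_left) (use dp in \<open>auto simp: coeff_eq_0\<close>)
  qed
  finally show ?thesis .
qed

lemma Qa_span:
  assumes X0: "X \<noteq> 0" and root: "poly (cp X) \<alpha> = 0"
  shows "Qa \<alpha> = Q.span ((\<lambda>i. \<alpha> ^ i) ` {..<degree X})"
proof
  show "Qa \<alpha> \<subseteq> Q.span ((\<lambda>i. \<alpha> ^ i) ` {..<degree X})"
  proof
    fix x assume "x \<in> Qa \<alpha>"
    then obtain p where x: "x = poly (cp p) \<alpha>" by (auto simp: Qa_def)
    define r where "r = p mod X"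
    have "p = X * (p div X) + r" by (simp add: r_def)
    then have "poly (cp p) \<alpha> = poly (cp (X * (p div X) + r)) \<alpha>" by simp
    then have "poly (cp p) \<alpha> = poly (cp r) \<alpha>" using root by simp
    also have "\<dots> = (\<Sum>i<degree X. of_rat (coeff r i) * \<alpha> ^ i)"
    proof -
      have "degree (cp r) < degree X \<or> cp r = 0"
        using degree_mod_less[of X p] X0 by (auto simp: r_def)
      then show ?thesis by (subst poly_as_sum_lt) auto
    qed
    also have "\<dots> \<in> Q.span ((\<lambda>i. \<alpha> ^ i) ` {..<degree X})"
      by (intro Q.span_sum Q.span_scale Q.span_base) auto
    finally show "x \<in> Q.span ((\<lambda>i. \<alpha> ^ i) ` {..<degree X})" using x by simp
  qed
  show "Q.span ((\<lambda>i. \<alpha> ^ i) ` {..<degree X}) \<subseteq> Qa \<alpha>"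
  proof (rule Q.span_minimal)
    show "(\<lambda>i. \<alpha> ^ i) ` {..<degree X} \<subseteq> Qa \<alpha>" by auto
    show "Q.subspace (Qa \<alpha>)"
      unfolding Q.subspace_def
    proof (intro conjI ballI allI)
      show "0 \<in> Qa \<alpha>" using Qa_of_rat[of 0] by simp
      fix x assume "x \<in> Qa \<alpha>"
      then obtain p where x: "x = poly (cp p) \<alpha>" by (auto simp: Qa_def)
      fix c show "of_rat c * x \<in> Qa \<alpha>" using Qa_poly[of "smult c p"] x by simp
      fix y assume "y \<in> Qa \<alpha>"
      then obtain q where y: "y = poly (cp q) \<alpha>" by (auto simp: Qa_def)
      show "x + y \<in> Qa \<alpha>" using Qa_poly[of "p + q"] x y by simp
    qed
  qed
qed

lemma irr_powers_indep:
  assumes irr: "irreducible (X :: rat poly)" and root: "poly (cp X) \<alpha> = 0"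
  shows "inj_on (\<lambda>i. \<alpha> ^ i) {..<degree X}" "Q.independent ((\<lambda>i. \<alpha> ^ i) ` {..<degree X})"
proof -
  have X0: "X \<noteq> 0" using irr by auto
  have small: "p = 0" if "degree p < degree X" "poly (cp p) \<alpha> = 0" for p
  proof (rule ccontr)
    assume "p \<noteq> 0"
    moreover have "X dvd p" using irr_root_dvd[OF irr root] that by simp
    ultimately have "degree X \<le> degree p" by (rule dvd_imp_degree_le[rotated])
    then show False using that by simp
  qed
  show inj: "inj_on (\<lambda>i. \<alpha> ^ i) {..<degree X}"
  proof (rule inj_onI, rule ccontr)
    fix i j assume ij: "i \<in> {..<degree X}" "j \<in> {..<degree X}" "\<alpha> ^ i = \<alpha> ^ j" "i \<noteq> j"
    define p :: "rat poly" where "p = monom 1 i - monom 1 j"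
    have "coeff p i = 1" using ij by (simp add: p_def coeff_monom)
    then have "p \<noteq> 0" by auto
    moreover have "degree p < degree X"
      using ij degree_diff_le[of "monom (1::rat) i" "max i j" "monom 1 j"]
      by (simp add: p_def degree_monom_eq) 
    moreover have "poly (cp p) \<alpha> = 0" using ij by (simp add: p_def poly_monom)
    ultimately show False using small by blast
  qed
  show "Q.independent ((\<lambda>i. \<alpha> ^ i) ` {..<degree X})"
  proof
    assume "Q.dependent ((\<lambda>i. \<alpha> ^ i) ` {..<degree X})"
    then obtain u where u: "\<exists>v\<in>(\<lambda>i. \<alpha> ^ i) ` {..<degree X}. u v \<noteq> 0"
      "(\<Sum>v\<in>(\<lambda>i. \<alpha> ^ i) ` {..<degree X}. of_rat (u v) * v) = 0"
      using Q.dependent_finite[of "(\<lambda>i. \<alpha> ^ i) ` {..<degree X}"] by auto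
    define p :: "rat poly" where "p = (\<Sum>i<degree X. monom (u (\<alpha> ^ i)) i)"
    have "poly (cp p) \<alpha> = (\<Sum>i<degree X. of_rat (u (\<alpha> ^ i)) * \<alpha> ^ i)"
      by (simp add: p_def poly_sum poly_monom)
    also have "\<dots> = 0" using u(2) by (subst (asm) sum.reindex[OF inj]) simp
    finally have "poly (cp p) \<alpha> = 0" .
    moreover have "degree p < degree X"
    proof -
      have "degree p \<le> degree X - 1"
        unfolding p_def by (rule degree_sum_le) (auto intro: order.trans[OF degree_monom_le])
      moreover have "degree X > 0"
      proof -
        have "\<not> is_unit X" using irr by (simp add: irreducible_def)
        then show ?thesis using is_unit_iff_degree[OF X0] by simp
      qed
      ultimately show ?thesis by linarith
    qed
    ultimately have "p = 0" using small by blast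
    moreover obtain i0 where i0: "i0 < degree X" "u (\<alpha> ^ i0) \<noteq> 0" using u(1) by auto
    have "coeff p i0 = u (\<alpha> ^ i0)" using i0 by (simp add: p_def coeff_sum coeff_monom)
    ultimately show False using i0 by simp
  qed
qed

lemma ext_degree_Qa:
  assumes irr: "irreducible (X :: rat poly)" and root: "poly (cp X) \<alpha> = 0"
  shows "ext_degree (Qa \<alpha>) = degree X"
proof -
  have X0: "X \<noteq> 0" using irr by auto
  have "ext_degree (Qa \<alpha>) = card ((\<lambda>i. \<alpha> ^ i) ` {..<degree X})"
    by (rule ext_degree_eq) (use Qa_span[OF X0 root] irr_powers_indep[OF irr root] in auto)
  also have "\<dots> = degree X" using irr_powers_indep(1)[OF irr root] by (simp add: card_image)
  finally show ?thesis .
qed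

abbreviation ip :: "int poly \<Rightarrow> rat poly" where "ip \<equiv> map_poly of_int"

lemma coeff_ip[simp]: "coeff (ip p) i = of_int (coeff p i)"
  by (simp add: coeff_map_poly)
lemma ip_add[simp]: "ip (p + q) = ip p + ip q"
  by (rule poly_eqI) simp
lemma ip_diff[simp]: "ip (p - q) = ip p - ip q"
  by (rule poly_eqI) simp
lemma ip_uminus[simp]: "ip (- p) = - ip p"
  by (rule poly_eqI) simp
lemma ip_smult[simp]: "ip (smult r p) = smult (of_int r) (ip p)"
  by (rule poly_eqI) simp
lemma ip_pCons[simp]: "ip (pCons r p) = pCons (of_int r) (ip p)"
  by (simp add: map_poly_pCons)
lemma ip_monom[simp]: "ip (monom r k) = monom (of_int r) k"
  by (simp add: map_poly_monom)
lemma ip_1[simp]: "ip 1 = 1"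
  by simp
lemma ip_mult[simp]: "ip (p * q) = ip p * ip q"
  by (induction p) (simp_all add: algebra_simps)
lemma ip_power[simp]: "ip (p ^ k) = ip p ^ k"
  by (induction k) simp_all
lemma ip_pcompose[simp]: "ip (pcompose p q) = pcompose (ip p) (ip q)"
  by (induction p) (simp_all add: pcompose_pCons)
lemma ip_eq_iff[simp]: "ip p = ip q \<longleftrightarrow> p = q"
  by (auto simp: poly_eq_iff)
lemma ip_eq_0_iff[simp]: "ip p = 0 \<longleftrightarrow> p = 0"
  using ip_eq_iff[of p 0] by simp
lemma degree_ip[simp]: "degree (ip p) = degree p"
  by (simp add: degree_map_poly)

lemma monic_divmod_int:
  fixes F p :: "int poly"
  assumes "lead_coeff F = 1"
  shows "\<exists>s r. p = F * s + r \<and> (r = 0 \<or> degree r < degree F)"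
proof -
  have F0: "F \<noteq> 0" using assms by auto
  obtain s r where sr: "pseudo_divmod p F = (s, r)" by (cases "pseudo_divmod p F")
  from pseudo_divmod[OF F0 sr] assms show ?thesis by auto
qed

lemma int_quotient:
  fixes F P2 :: "int poly"
  assumes mon: "lead_coeff F = 1" and dv: "ip F dvd ip P2"
  shows "\<exists>U. P2 = F * U"
proof -
  obtain s r where sr: "P2 = F * s + r" "r = 0 \<or> degree r < degree F"
    using monic_divmod_int[OF mon] by blast
  have "ip F dvd ip r"
  proof -
    have "ip r = ip P2 - ip F * ip s" using sr by simp
    then show ?thesis using dv by simp
  qed
  then have "r = 0"
    using sr(2) dvd_imp_degree_le[of "ip F" "ip r"] by fastforce
  then show ?thesis using sr by auto
qed

subsection \<open>Freshman's dream modulo a prime\<close>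

lemma freshman:
  fixes x y :: "'a :: comm_ring_1"
  assumes q: "prime q"
  shows "\<exists>z. (x + y) ^ q = x ^ q + y ^ q + of_nat q * z"
proof -
  have q0: "q > 0" using q prime_gt_0_nat by blast
  have "(x + y) ^ q = (\<Sum>k\<le>q. of_nat (q choose k) * x ^ k * y ^ (q - k))"
    by (rule binomial_ring)
  also have "\<dots> = (\<Sum>k\<in>{0,q}. of_nat (q choose k) * x ^ k * y ^ (q - k))
      + (\<Sum>k\<in>{..q}-{0,q}. of_nat (q choose k) * x ^ k * y ^ (q - k))"
    by (subst sum.subset_diff[of "{0,q}"]) auto
  also have "(\<Sum>k\<in>{0,q}. of_nat (q choose k) * x ^ k * y ^ (q - k)) = x ^ q + y ^ q"
    using q0 by simp
  also have "(\<Sum>k\<in>{..q}-{0,q}. of_nat (q choose k) * x ^ k * y ^ (q - k))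
     = of_nat q * (\<Sum>k\<in>{..q}-{0,q}. of_nat ((q choose k) div q) * x ^ k * y ^ (q - k))"
  proof -
    have "of_nat (q choose k) = (of_nat q * of_nat ((q choose k) div q) :: 'a)" if "k \<in> {..q}-{0,q}" for k
    proof -
      have "q dvd (q choose k)" using that q by (intro dvd_choose_prime) auto
      then show ?thesis by (metis dvd_mult_div_cancel of_nat_mult)
    qed
    then show ?thesis by (simp add: sum_distrib_left mult.assoc)
  qed
  finally show ?thesis by blast
qed

lemma fermat_nat_aux:
  assumes q: "prime q"
  shows "\<exists>t. (int b) ^ q = int b + int q * t"
proof (induction b)
  case 0
  then show ?case using q by (auto simp: prime_gt_0_nat power_0_left)
next
  case (Suc b)
  obtain t where t: "(int b) ^ q = int b + int q * t" using Suc by blast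
  obtain z where z: "(int b + 1) ^ q = int b ^ q + 1 ^ q + of_nat q * z" using freshman[OF q] by blast
  have "int (Suc b) ^ q = int (Suc b) + int q * (t + z)" using t z by (simp add: algebra_simps)
  then show ?case by blast
qed

lemma fermat_int:
  assumes q: "prime q"
  shows "\<exists>t. (a::int) ^ q = a + int q * t"
proof -
  have qpos: "int q > 0" using q prime_gt_0_nat by auto
  define b where "b = a mod int q"
  define k where "k = a div int q"
  have a: "a = b + int q * k" by (simp add: b_def k_def)
  have b0: "b \<ge> 0" using qpos by (simp add: b_def)
  obtain t where t: "b ^ q = b + int q * t"
    using fermat_nat_aux[OF q, of "nat b"] b0 by auto
  obtain z where z: "(b + int q * k) ^ q = b ^ q + (int q * k) ^ q + of_nat q * z" using freshman[OF q] by blast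
  have q1: "q = Suc (q - 1)" using q prime_gt_0_nat by auto
  have "(int q * k) ^ q = int q * (int q ^ (q - 1) * k ^ q)"
    by (subst (1 2) q1) (simp add: power_mult_distrib)
  then have "a ^ q = a + int q * (t + int q ^ (q - 1) * k ^ q + z - k)"
    using a t z by (simp add: algebra_simps)
  then show ?thesis by blast
qed

lemma frobenius_int_poly:
  fixes G :: "int poly"
  assumes q: "prime q"
  shows "\<exists>H. G ^ q = pcompose G (monom 1 q) + smult (int q) H"
proof (induction G)
  case 0
  then show ?case using q by (auto simp: prime_gt_0_nat power_0_left)
next
  case (pCons a G)
  obtain H where H: "G ^ q = pcompose G (monom 1 q) + smult (int q) H" using pCons by blast
  obtain t where t: "a ^ q = a + int q * t" using fermat_int[OF q] by blast
  have e: "pCons a G = [:a:] + monom 1 1 * G" by (simp add: monom_Suc)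
  obtain K where K: "([:a:] + monom 1 1 * G) ^ q = [:a:] ^ q + (monom 1 1 * G) ^ q + of_nat q * K"
    using freshman[OF q] by blast
  have "[:a:] ^ q = [:a:] + smult (int q) [:t:]" using t by (simp add: poly_const_pow monom_0)
  moreover have "(monom 1 1 * G) ^ q = monom 1 q * G ^ q"
    by (simp add: power_mult_distrib monom_power)
  moreover have "(of_nat q :: int poly) * K = smult (int q) K"
    by (simp add: of_nat_poly)
  moreover have "pcompose (pCons a G) (monom 1 q) = [:a:] + monom 1 q * pcompose G (monom 1 q)"
    by (simp add: pcompose_pCons monom_0)
  ultimately have "(pCons a G) ^ q = pcompose (pCons a G) (monom 1 q) + smult (int q) ([:t:] + monom 1 q * H + K)"
    using H K e by (simp add: algebra_simps smult_add_right)
  then show ?case by blast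
qed

subsection \<open>Gauss lemma for monic factors\<close>

lemma rat_poly_denom: "\<exists>d F. d > 0 \<and> smult (of_int d) (p :: rat poly) = ip F"
proof (induction p)
  case 0
  then show ?case by (intro exI[of _ 1] exI[of _ 0]) simp
next
  case (pCons a p)
  obtain d F where dF: "d > 0" "smult (of_int d) p = ip F" using pCons by blast
  obtain x y where a: "a = Rat.Fract x y" "y > 0" by (cases a) auto
  have ya: "of_int y * a = of_int x" using a by (simp add: Fract_of_int_quotient)
  have "smult (of_int (d * y)) (pCons a p) = ip (pCons (d * x) (smult y F))"
  proof -
    have "smult (of_int (d * y)) (pCons a p) = pCons (of_int d * (of_int y * a)) (smult (of_int y) (smult (of_int d) p))"
      by (simp add: algebra_simps)
    also have "\<dots> = ip (pCons (d * x) (smult y F))" using ya dF by simp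
    finally show ?thesis .
  qed
  moreover have "d * y > 0" using dF a by simp
  ultimately show ?case by blast
qed

lemma rat_poly_primitive:
  assumes p0: "(p :: rat poly) \<noteq> 0"
  shows "\<exists>s A. s \<noteq> 0 \<and> smult s p = ip A \<and> content A = 1"
proof -
  obtain d F where dF: "d > 0" "smult (of_int d) p = ip F" using rat_poly_denom by blast
  have F0: "F \<noteq> 0" using dF p0 by (metis ip_eq_0_iff of_int_0_less_iff order_less_irrefl smult_eq_0_iff)
  define A where "A = primitive_part F"
  have cA: "content A = 1" using F0 by (simp add: A_def)
  have cF: "content F \<noteq> 0" using F0 by simp
  have "F = smult (content F) A" by (simp add: A_def)
  then have "ip F = smult (of_int (content F)) (ip A)" by (metis ip_smult)
  then have "smult (of_int d / of_int (content F)) p = ip A"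
    using dF cF by (metis (no_types, lifting) divide_inverse mult.commute nonzero_divide_eq_eq of_int_eq_0_iff smult_smult
        smult_1_left mult_1_left nonzero_inverse_mult_distrib) 
  moreover have "of_int d / of_int (content F) \<noteq> (0::rat)" using dF cF by simp
  ultimately show ?thesis using cA by blast
qed

lemma content_monic: "lead_coeff (h :: int poly) = 1 \<Longrightarrow> content h = 1"
proof -
  assume h: "lead_coeff h = 1"
  have "content h dvd 1" using content_dvd_coeff[of h "degree h"] h by simp
  then show ?thesis by (metis is_unit_content_iff)
qed

lemma gauss_monic:
  fixes P Qp :: "rat poly" and h :: "int poly"
  assumes eq: "P * Qp = ip h" and mP: "lead_coeff P = 1" and mh: "lead_coeff h = 1"
  shows "\<exists>F. P = ip F \<and> lead_coeff F = 1"
proof -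
  have h0: "h \<noteq> 0" using mh by auto
  have P0: "P \<noteq> 0" and Q0: "Qp \<noteq> 0" using eq h0 by auto
  have mQ: "lead_coeff Qp = 1"
  proof -
    have "lead_coeff (P * Qp) = lead_coeff (ip h)" using eq by simp
    then show ?thesis using mP mh by (simp add: lead_coeff_mult)
  qed
  obtain s1 A where A: "s1 \<noteq> 0" "smult s1 P = ip A" "content A = 1" using rat_poly_primitive[OF P0] by blast
  obtain s2 B where B: "s2 \<noteq> 0" "smult s2 Qp = ip B" "content B = 1" using rat_poly_primitive[OF Q0] by blast
  have s1: "s1 = of_int (lead_coeff A)"
  proof -
    have "lead_coeff (smult s1 P) = lead_coeff (ip A)" using A by simp
    then show ?thesis using mP A(1) by simp
  qed
  have s2: "s2 = of_int (lead_coeff B)"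
  proof -
    have "lead_coeff (smult s2 Qp) = lead_coeff (ip B)" using B by simp
    then show ?thesis using mQ B(1) by simp
  qed
  define k where "k = lead_coeff A * lead_coeff B"
  have "ip (A * B) = smult (s1 * s2) (P * Qp)"
    unfolding ip_mult A(2)[symmetric] B(2)[symmetric] by (simp add: mult.commute)
  also have "\<dots> = ip (smult k h)" using eq s1 s2 by (simp add: k_def)
  finally have "ip (A * B) = ip (smult k h)" .
  then have AB: "A * B = smult k h" by (simp only: ip_eq_iff)
  have "content (A * B) = 1" using A B by (simp add: content_mult)
  then have "normalize k = 1" using AB content_monic[OF mh] by simp
  then have "is_unit k" using normalize_1_iff by blast
  then have "is_unit (lead_coeff A)" unfolding k_def by (metis is_unit_mult_iff)
  then have "\<bar>lead_coeff A\<bar> = 1" by (simp only: zdvd1_eq)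
  then have lA: "lead_coeff A = 1 \<or> lead_coeff A = -1" by linarith
  show ?thesis
  proof (cases "lead_coeff A = 1")
    case True
    then have "P = ip A" using A s1 by simp
    then show ?thesis using True by blast
  next
    case False
    then have m1: "lead_coeff A = -1" using lA by simp
    then have "smult (-1) P = ip A" using A s1 by simp
    then have "smult (-1) (smult (-1) P) = smult (-1) (ip A)" by simp
    then have "P = ip (smult (-1) A)" by simp
    moreover have "lead_coeff (smult (-1) A) = 1" using m1 by simp
    ultimately show ?thesis by blast
  qed
qed

lemma power_add_split: "\<exists>C. ((x::'a::comm_ring_1) + y) ^ n = x ^ n + y * C"
proof (induction n)
  case 0 then show ?case by (intro exI[of _ 0]) simp
next
  case (Suc n)
  obtain C where C: "(x + y) ^ n = x ^ n + y * C" using Suc by blast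
  have "(x + y) ^ Suc n = x ^ Suc n + y * (x ^ n + (x + y) * C)"
    by (simp add: C algebra_simps)
  then show ?case by blast
qed

lemma poly_cp_ip_pcompose_monom: "poly (cp (ip (pcompose G (monom 1 q)))) z = poly (cp (ip G)) (z ^ q)"
  by (simp add: poly_pcompose poly_monom)

lemma irreducible_degree_pos: "irreducible (P :: rat poly) \<Longrightarrow> degree P > 0"
proof -
  assume irr: "irreducible P"
  then have P0: "P \<noteq> 0" by auto
  have "\<not> is_unit P" using irr by (simp add: irreducible_def)
  then show ?thesis using is_unit_iff_degree[OF P0] by simp
qed

lemma deriv_identity:
  fixes F G :: "int poly"
  assumes hG: "monom 1 N - 1 = F * G" and N: "N > 0"
  shows "[:of_nat N:] = G * ([:0,1:] * pderiv F) + F * ([:0,1:] * pderiv G - smult (of_nat N) G)"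
proof -
  define h :: "int poly" where "h = monom 1 N - 1"
  have xm: "[:0,1:] * monom (c::int) (N - 1) = monom c N" for c
  proof -
    have "[:0,1:] * monom c (N - 1) = pCons 0 (monom c (N - 1))" by simp
    also have "\<dots> = monom c (Suc (N - 1))" by (simp add: monom_Suc)
    finally show ?thesis using N by simp
  qed
  have "[:0,1:] * pderiv h = smult (of_nat N) (monom 1 N)"
    using xm[of "of_nat N"] by (simp add: h_def pderiv_diff pderiv_monom smult_monom)
  then have "[:of_nat N:] = [:0,1:] * pderiv h - smult (of_nat N) h"
    by (simp add: h_def smult_diff_right)
  also have "h = F * G" using hG by (simp add: h_def)
  finally show ?thesis by (simp add: pderiv_mult algebra_simps)
qed

lemma cyc_prime:
  fixes P :: "rat poly" and \<gamma> :: complex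
  assumes irr: "irreducible P" and mon: "lead_coeff P = 1"
    and dv: "P dvd (monom 1 N - 1)" and N: "N > 0"
    and root: "poly (cp P) \<gamma> = 0" and q: "prime q" "\<not> q dvd N"
  shows "poly (cp P) (\<gamma> ^ q) = 0"
proof (rule ccontr)
  assume nz: "poly (cp P) (\<gamma> ^ q) \<noteq> 0"
  define h :: "int poly" where "h = monom 1 N - 1"
  have ch: "coeff h i = (if i = N then 1 else 0) - (if i = 0 then 1 else 0)" for i
    by (simp add: h_def coeff_monom)
  have dh: "degree h = N"
  proof (rule order.antisym)
    show "degree h \<le> N" by (rule degree_le) (auto simp: ch)
    show "N \<le> degree h" by (rule le_degree) (use N in \<open>simp add: ch\<close>)
  qed
  have mh: "lead_coeff h = 1" using dh N by (simp add: ch)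
  have iph: "ip h = monom 1 N - 1" by (simp add: h_def)
  obtain Qp where Qp: "monom 1 N - 1 = P * Qp" using dv by (elim dvdE)
  obtain F where F: "P = ip F" "lead_coeff F = 1"
    using gauss_monic[of P Qp h] Qp iph mon mh by auto
  obtain G where hG: "h = F * G" using int_quotient[OF F(2), of h] dv F iph by auto
  have dF: "degree F > 0" using irreducible_degree_pos[OF irr] F by simp
  have ev: "poly (cp (ip h)) z = z ^ N - 1" for z by (simp add: h_def poly_monom)
  have "poly (cp (ip h)) \<gamma> = 0" using root F hG by simp
  then have gN: "\<gamma> ^ N = 1" using ev by simp
  have "poly (cp (ip h)) (\<gamma> ^ q) = 0" using ev gN by (simp flip: power_mult add: mult.commute power_mult)
  then have "poly (cp (ip F)) (\<gamma> ^ q) * poly (cp (ip G)) (\<gamma> ^ q) = 0" using hG by simp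
  then have "poly (cp (ip G)) (\<gamma> ^ q) = 0" using nz F by simp
  then have "poly (cp (ip (pcompose G (monom 1 q)))) \<gamma> = 0" by (subst poly_cp_ip_pcompose_monom)
  then have "P dvd ip (pcompose G (monom 1 q))" using irr_root_dvd[OF irr root] by blast
  then have "ip F dvd ip (pcompose G (monom 1 q))" by (simp only: F(1))
  from int_quotient[OF F(2) this] obtain U where U: "pcompose G (monom 1 q) = F * U" by blast
  obtain H where H: "G ^ q = pcompose G (monom 1 q) + smult (int q) H" using frobenius_int_poly[OF q(1)] by blast
  define A where "A = [:0,1:] * pderiv F"
  define B where "B = [:0,1:] * pderiv G - smult (of_nat N) G"
  have NGF: "[:of_nat N:] = G * A + F * B" using deriv_identity[of N F G] hG N by (simp add: h_def A_def B_def)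
  obtain C where C: "(G * A + F * B) ^ q = (G * A) ^ q + (F * B) * C" using power_add_split by blast
  have "[:of_nat N ^ q:] = [:of_nat N:] ^ q" by (simp add: poly_const_pow)
  also have "\<dots> = (G * A + F * B) ^ q" by (simp only: NGF)
  also have "\<dots> = (F * U + smult (int q) H) * A ^ q + (F * B) * C"
    using C H U by (simp add: power_mult_distrib)
  finally have E: "[:of_nat N ^ q:] = F * (U * A ^ q + B * C) + smult (int q) (H * A ^ q)"
    by (simp add: algebra_simps)
  obtain S R0 where SR: "H * A ^ q = F * S + R0" "R0 = 0 \<or> degree R0 < degree F"
    using monic_divmod_int[OF F(2)] by blast
  define W where "W = U * A ^ q + B * C + smult (int q) S"
  have E2: "[:of_nat N ^ q:] - smult (int q) R0 = F * W"
    using E SR by (simp add: W_def algebra_simps smult_add_right)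
  have W0: "W = 0"
  proof (rule ccontr)
    assume "W \<noteq> 0"
    moreover have "F \<noteq> 0" using F(2) by auto
    ultimately have "degree (F * W) = degree F + degree W" by (simp add: degree_mult_eq)
    then have "degree (F * W) \<ge> degree F" by simp
    moreover have "degree ([:of_nat N ^ q:] - smult (int q) R0) < degree F"
    proof -
      have "degree ([:of_nat N ^ q:] - smult (int q) R0) \<le> max (degree [:int N ^ q:]) (degree (smult (int q) R0))"
        by (rule degree_diff_le_max)
      also have "\<dots> \<le> max 0 (degree R0)" by (simp add: degree_smult_le)
      finally show ?thesis using SR(2) dF by auto
    qed
    ultimately show False using E2 by simp
  qed
  have "coeff ([:of_nat N ^ q:] - smult (int q) R0) 0 = 0" using E2 W0 by simp
  then have "int N ^ q = int q * coeff R0 0" by simp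
  then have "int q dvd int N ^ q" by simp
  then have "q dvd N ^ q" by (metis of_nat_dvd_iff of_nat_power)
  then have "q dvd N" using q(1) prime_dvd_power by blast
  then show False using q(2) by simp
qed

lemma min_poly_exists:
  assumes "p \<noteq> 0" "poly (cp p) \<alpha> = 0"
  shows "\<exists>P. P \<noteq> 0 \<and> lead_coeff P = 1 \<and> poly (cp P) \<alpha> = 0 \<and>
       (\<forall>q. q \<noteq> 0 \<and> poly (cp q) \<alpha> = 0 \<longrightarrow> degree P \<le> degree q)"
proof -
  define d where "d = (LEAST d. \<exists>q. q \<noteq> 0 \<and> poly (cp q) \<alpha> = 0 \<and> degree q = d)"
  have ex: "\<exists>q. q \<noteq> 0 \<and> poly (cp q) \<alpha> = 0 \<and> degree q = degree p" using assms by blast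
  have "\<exists>q. q \<noteq> 0 \<and> poly (cp q) \<alpha> = 0 \<and> degree q = d"
    unfolding d_def by (rule LeastI_ex) (use ex in blast)
  then obtain q where q: "q \<noteq> 0" "poly (cp q) \<alpha> = 0" "degree q = d" by blast
  have least: "d \<le> degree r" if "r \<noteq> 0" "poly (cp r) \<alpha> = 0" for r
    unfolding d_def by (rule Least_le) (use that in blast)
  define P where "P = smult (inverse (lead_coeff q)) q"
  have "P \<noteq> 0" "lead_coeff P = 1" "poly (cp P) \<alpha> = 0" "degree P = d"
    using q by (auto simp: P_def)
  then show ?thesis using least by (intro exI[of _ P]) auto
qed

lemma min_poly_props:
  assumes "p \<noteq> 0" "poly (cp p) \<alpha> = 0"
  shows "min_poly \<alpha> \<noteq> 0" "lead_coeff (min_poly \<alpha>) = 1" "poly (cp (min_poly \<alpha>)) \<alpha> = 0"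
    "\<And>q. q \<noteq> 0 \<Longrightarrow> poly (cp q) \<alpha> = 0 \<Longrightarrow> degree (min_poly \<alpha>) \<le> degree q"
  using someI_ex[OF min_poly_exists[OF assms]] unfolding min_poly_def by blast+

lemma min_poly_dvd:
  assumes "p \<noteq> 0" "poly (cp p) \<alpha> = 0" "poly (cp q) \<alpha> = 0"
  shows "min_poly \<alpha> dvd q"
proof -
  note P = min_poly_props[OF assms(1,2)]
  define r where "r = q mod min_poly \<alpha>"
  have "q = min_poly \<alpha> * (q div min_poly \<alpha>) + r" by (simp add: r_def)
  then have "poly (cp q) \<alpha> = poly (cp (min_poly \<alpha> * (q div min_poly \<alpha>) + r)) \<alpha>" by simp
  then have r0: "poly (cp r) \<alpha> = 0" using P(3) assms(3) by simp
  have "r = 0"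
  proof (rule ccontr)
    assume "r \<noteq> 0"
    then have "degree (min_poly \<alpha>) \<le> degree r" using P(4) r0 by blast
    moreover have "degree r < degree (min_poly \<alpha>)"
      using degree_mod_less[of "min_poly \<alpha>" q] P(1) \<open>r \<noteq> 0\<close> by (auto simp: r_def)
    ultimately show False by simp
  qed
  then show ?thesis by (simp add: r_def mod_eq_0_iff_dvd)
qed

lemma min_poly_irreducible:
  assumes "p \<noteq> 0" "poly (cp p) \<alpha> = 0"
  shows "irreducible (min_poly \<alpha>)"
proof -
  note P = min_poly_props[OF assms]
  have dP: "degree (min_poly \<alpha>) > 0"
  proof (rule ccontr)
    assume "\<not> degree (min_poly \<alpha>) > 0"
    then obtain c where "min_poly \<alpha> = [:c:]" by (metis degree_eq_zeroE gr0I)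
    then show False using P(1,3) by simp
  qed
  show ?thesis
  proof (rule irreducibleI)
    show "min_poly \<alpha> \<noteq> 0" by (rule P(1))
    show "\<not> is_unit (min_poly \<alpha>)" using dP is_unit_iff_degree[OF P(1)] by simp
    fix a b assume ab: "min_poly \<alpha> = a * b"
    then have a0: "a \<noteq> 0" and b0: "b \<noteq> 0" using P(1) by auto
    have dab: "degree (min_poly \<alpha>) = degree a + degree b" using ab a0 b0 by (simp add: degree_mult_eq)
    have "poly (cp a) \<alpha> * poly (cp b) \<alpha> = 0" using ab P(3) by (metis cp_mult poly_mult)
    then have "poly (cp a) \<alpha> = 0 \<or> poly (cp b) \<alpha> = 0" by simp
    then show "is_unit a \<or> is_unit b"
    proof
      assume "poly (cp a) \<alpha> = 0"
      then have "degree (min_poly \<alpha>) \<le> degree a" using P(4) a0 by blast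
      then have "degree b = 0" using dab by simp
      then show ?thesis using is_unit_iff_degree[OF b0] by simp
    next
      assume "poly (cp b) \<alpha> = 0"
      then have "degree (min_poly \<alpha>) \<le> degree b" using P(4) b0 by blast
      then have "degree a = 0" using dab by simp
      then show ?thesis using is_unit_iff_degree[OF a0] by simp
    qed
  qed
qed

lemma root_unity_poly: "N > 0 \<Longrightarrow> (monom (1::rat) N - 1) \<noteq> 0 \<and> poly (cp (monom 1 N - 1)) z = z ^ N - 1"
proof -
  assume N: "N > 0"
  have c: "coeff (monom (1::rat) N - 1) N = 1" using N by (simp add: coeff_monom)
  have "monom (1::rat) N - 1 \<noteq> 0"
  proof
    assume "monom (1::rat) N - 1 = 0"
    then have "coeff (monom (1::rat) N - 1) N = 0" by simp
    then show False using c by simp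
  qed
  then show ?thesis by (simp add: poly_monom)
qed

lemma min_poly_root_unity:
  assumes N: "N > 0" and z: "z ^ N = 1"
  shows "irreducible (min_poly z)" "lead_coeff (min_poly z) = 1" "min_poly z dvd (monom 1 N - 1)"
    "poly (cp (min_poly z)) z = 0"
proof -
  have p: "(monom (1::rat) N - 1) \<noteq> 0" "poly (cp (monom 1 N - 1)) z = 0" using root_unity_poly[OF N, of z] z by auto
  show "irreducible (min_poly z)" by (rule min_poly_irreducible[OF p])
  show "lead_coeff (min_poly z) = 1" "poly (cp (min_poly z)) z = 0" using min_poly_props[OF p] by auto
  show "min_poly z dvd (monom 1 N - 1)" by (rule min_poly_dvd[OF p p(2)])
qed

subsection \<open>Cyclotomic: all primitive powers are conjugates\<close>

lemma cyc_coprime: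
  fixes P :: "rat poly" and \<gamma> :: complex
  assumes irr: "irreducible P" and mon: "lead_coeff P = 1"
    and dv: "P dvd (monom 1 N - 1)" and N: "N > 0"
    and root: "poly (cp P) \<gamma> = 0" and cop: "coprime t N"
  shows "poly (cp P) (\<gamma> ^ t) = 0"
  using cop
proof (induction t rule: less_induct)
  case (less t)
  have gN: "\<gamma> ^ N = 1"
  proof -
    obtain k where "monom 1 N - 1 = P * k" using dv by (elim dvdE)
    then have "poly (cp (monom 1 N - 1)) \<gamma> = 0" using root by simp
    then show ?thesis using root_unity_poly[OF N] by simp
  qed
  show ?case
  proof (cases "t \<le> 1")
    case True
    show ?thesis
    proof (cases "t = 1")
      case True then show ?thesis using root by simp
    next
      case False
      then have "t = 0" using True by simp
      then have "N = 1" using less.prems by simp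
      then have "\<gamma> = 1" using gN by simp
      then show ?thesis using root \<open>t = 0\<close> by simp
    qed
  next
    case False
    then obtain q where q: "prime q" "q dvd t" using prime_factor_nat[of t] by auto
    obtain t' where t': "t = q * t'" using q(2) by (elim dvdE)
    have "t' < t" using t' False q(1) prime_gt_1_nat[OF q(1)] by (cases "t' = 0") auto
    moreover have "coprime t' N" using less.prems t' by simp
    ultimately have r': "poly (cp P) (\<gamma> ^ t') = 0" using less.IH by blast
    have "\<not> q dvd N"
    proof
      assume "q dvd N"
      then have "is_unit q" using coprime_common_divisor[OF less.prems q(2)] by blast
      then show False using q(1) by simp
    qed
    have "(\<gamma> ^ t') ^ q = \<gamma> ^ t" using t' by (simp add: power_mult[symmetric] mult.commute)
    then show ?thesis using cyc_prime[OF irr mon dv N r' q(1) \<open>\<not> q dvd N\<close>] by simp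
  qed
qed

lemma prim_root_pow_eq_1:
  fixes \<zeta> :: complex
  assumes zn: "\<zeta> ^ n = 1" and prim: "\<forall>k. 0 < k \<and> k < n \<longrightarrow> \<zeta> ^ k \<noteq> 1" and n: "n > 0"
  shows "\<zeta> ^ k = 1 \<longleftrightarrow> n dvd k"
proof -
  have "\<zeta> ^ k = \<zeta> ^ (n * (k div n) + k mod n)" by simp
  also have "\<dots> = (\<zeta> ^ n) ^ (k div n) * \<zeta> ^ (k mod n)" by (simp only: power_add power_mult)
  also have "\<dots> = \<zeta> ^ (k mod n)" by (simp add: zn)
  finally have e: "\<zeta> ^ k = \<zeta> ^ (k mod n)" .
  show ?thesis
  proof
    assume "\<zeta> ^ k = 1"
    then have "\<zeta> ^ (k mod n) = 1" using e by simp
    then have "k mod n = 0" using prim n by (meson mod_less_divisor neq0_conv)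
    then show "n dvd k" by auto
  next
    assume "n dvd k"
    then show "\<zeta> ^ k = 1" using e by simp
  qed
qed

lemma choose_t:
  fixes p m :: nat
  assumes p: "prime p" "p \<noteq> 2" and m: "m > 0"
  shows "\<exists>u. (u = 1 \<or> u = 2) \<and> coprime (1 + m * u) (p * m) \<and> \<not> (p * m) dvd (m * u)"
proof -
  have p2: "p > 2" using p prime_ge_2_nat[OF p(1)] by simp
  have ndv: "\<not> (p * m) dvd (m * u)" if "u = 1 \<or> u = 2" for u
  proof
    assume "(p * m) dvd (m * u)"
    then have "p dvd u" using m by (simp add: mult.commute)
    then show False using that p2 by (auto dest: dvd_imp_le)
  qed
  have cm: "coprime (1 + m * u) m" for u
  proof (rule coprimeI)
    fix d assume d: "d dvd (1 + m * u)" "d dvd m"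
    then have "d dvd m * u" by simp
    with d(1) have "d dvd (1 + m * u) - m * u" by (rule dvd_diff_nat)
    then have "d dvd 1" by simp
    then show "is_unit d" by simp
  qed
  have cp_of: "coprime (1 + m * u) (p * m)" if "\<not> p dvd (1 + m * u)" for u
  proof -
    have "coprime (1 + m * u) p" using prime_imp_coprime[OF p(1) that] by (simp add: coprime_commute)
    then show ?thesis using cm by simp
  qed
  show ?thesis
  proof (cases "p dvd (1 + m * 1)")
    case False
    then show ?thesis using cp_of ndv by blast
  next
    case True
    have "\<not> p dvd (1 + m * 2)"
    proof
      assume "p dvd (1 + m * 2)"
      then have "p dvd (1 + m * 2) - (1 + m * 1)" using True by (rule dvd_diff_nat)
      then have pm: "p dvd m" by simp
      then have "p dvd (1 + m * 1) - m" using True by (intro dvd_diff_nat) auto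
      then have "p dvd 1" by simp
      then show False using p(1) by simp
    qed
    then show ?thesis using cp_of ndv by blast
  qed
qed

lemma cyclo_no_extra:
  fixes \<zeta> :: complex
  assumes zn: "\<zeta> ^ n = 1" and prim: "\<forall>k. 0 < k \<and> k < n \<longrightarrow> \<zeta> ^ k \<noteq> 1" and odd: "odd n"
    and l: "l > 0" "l dvd n" and h: "\<zeta> ^ k = poly (cp h) (\<zeta> ^ l)"
  shows "l dvd k"
proof (rule ccontr)
  assume nd: "\<not> l dvd k"
  have n0: "n > 0" using odd by (simp add: odd_pos)
  define m where "m = n div l"
  have nlm: "n = l * m" using l by (simp add: m_def)
  have m0: "m > 0" using nlm n0 by simp
  have z0: "\<zeta> \<noteq> 0" using zn n0 by (auto simp: power_0_left)
  note pe = prim_root_pow_eq_1[OF zn prim n0]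
  define \<omega> where "\<omega> = \<zeta> ^ l"
  have wm: "\<omega> ^ m = 1" by (simp add: \<omega>_def power_mult[symmetric] nlm[symmetric] zn)
  note mpw = min_poly_root_unity[OF m0 wm]
  have K: "subfield_C (Qa \<omega>)" by (rule Qa_subfield[OF mpw(1) mpw(4)])
  have zk: "\<zeta> ^ k \<in> Qa \<omega>" using h by (auto simp: \<omega>_def)
  have zl: "\<zeta> ^ l \<in> Qa \<omega>" by (auto simp: \<omega>_def)
  have k0: "k \<noteq> 0" using nd by (rule contrapos_nn) simp
  define g where "g = gcd k l"
  obtain x y where xy: "k * x = l * y + g" using bezout_nat[OF k0, of l] by (auto simp: g_def)
  have "\<zeta> ^ g = (\<zeta> ^ k) ^ x * inverse ((\<zeta> ^ l) ^ y)"
  proof -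
    have "(\<zeta> ^ k) ^ x = (\<zeta> ^ l) ^ y * \<zeta> ^ g" by (simp flip: power_mult power_add add: xy)
    then show ?thesis using z0 by (simp add: field_simps)
  qed
  then have zg: "\<zeta> ^ g \<in> Qa \<omega>" using K zk zl by (simp add: sf_mult sf_inverse sf_power)
  have gl: "g dvd l" "g dvd k" by (simp_all add: g_def)
  have gnl: "g \<noteq> l" using gl nd by auto
  have g0: "g > 0" using l by (simp add: g_def)
  define r where "r = l div g"
  have lgr: "l = g * r" using gl by (simp add: r_def)
  have r1: "r \<noteq> 1" using gnl lgr by auto
  obtain p where p: "prime p" "p dvd r" using prime_factor_nat[OF r1] by blast
  obtain r' where rr: "r = p * r'" using p(2) by (elim dvdE)
  define s where "s = g * r'"
  have lsp: "l = s * p" by (simp add: s_def lgr rr)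
  have s0: "s > 0" using lsp l by (cases s) auto
  have zs: "\<zeta> ^ s \<in> Qa \<omega>" using K zg by (simp add: s_def power_mult sf_power)
  have pn: "p dvd n" using lsp nlm by simp
  have p2: "p \<noteq> 2" using pn odd by auto
  define \<epsilon> where "\<epsilon> = \<zeta> ^ s"
  define N where "N = p * m"
  have N0: "N > 0" using m0 p(1) prime_gt_0_nat by (simp add: N_def)
  have ep: "\<epsilon> ^ p = \<omega>" by (simp add: \<epsilon>_def \<omega>_def lsp power_mult)
  have eN: "\<epsilon> ^ N = 1"
  proof -
    have "s * N = n" by (simp add: N_def nlm lsp mult.assoc)
    then show ?thesis by (simp add: \<epsilon>_def power_mult[symmetric] zn)
  qed
  have eord: "\<epsilon> ^ j = 1 \<longleftrightarrow> N dvd j" for j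
  proof -
    have "\<epsilon> ^ j = 1 \<longleftrightarrow> n dvd s * j" by (simp add: \<epsilon>_def power_mult[symmetric] pe)
    also have "n = s * N" by (simp add: N_def nlm lsp mult.assoc)
    also have "s * N dvd s * j \<longleftrightarrow> N dvd j" using s0 by simp
    finally show ?thesis .
  qed
  have e0: "\<epsilon> \<noteq> 0" using z0 by (simp add: \<epsilon>_def)
  obtain h' where h': "\<epsilon> = poly (cp h') \<omega>" using zs by (auto simp: Qa_def \<epsilon>_def)
  note mpe = min_poly_root_unity[OF N0 eN]
  define Hq where "Hq = pcompose h' (monom 1 p) - [:0,1:]"
  have evH: "poly (cp Hq) z = poly (cp h') (z ^ p) - z" for z
    by (simp add: Hq_def poly_pcompose poly_monom)
  have "poly (cp Hq) \<epsilon> = 0" using evH[of \<epsilon>] ep h' by simp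
  then have dH: "min_poly \<epsilon> dvd Hq" using irr_root_dvd[OF mpe(1) mpe(4)] by blast
  obtain u where u: "u = 1 \<or> u = 2" "coprime (1 + m * u) N" "\<not> N dvd (m * u)"
    using choose_t[OF p(1) p2 m0] by (auto simp: N_def)
  define t where "t = 1 + m * u"
  have "poly (cp (min_poly \<epsilon>)) (\<epsilon> ^ t) = 0"
    using cyc_coprime[OF mpe(1) mpe(2) mpe(3) N0 mpe(4)] u(2) unfolding t_def by blast
  then have "poly (cp Hq) (\<epsilon> ^ t) = 0" using dH by (metis cp_dvd dvd_def mult_eq_0_iff poly_mult)
  then have ht: "poly (cp h') ((\<epsilon> ^ t) ^ p) = \<epsilon> ^ t" using evH by simp
  have "(\<epsilon> ^ t) ^ p = \<omega>"
  proof -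
    have "(\<epsilon> ^ t) ^ p = \<epsilon> ^ p * (\<epsilon> ^ N) ^ u"
    proof -
      have "t * p = p + N * u" by (simp add: t_def N_def algebra_simps)
      then show ?thesis by (simp add: power_mult[symmetric] power_add)
    qed
    then show ?thesis using eN ep by simp
  qed
  then have "\<epsilon> ^ t = \<epsilon>" using ht h' by simp
  then have "\<epsilon> * \<epsilon> ^ (m * u) = \<epsilon> * 1" by (simp add: t_def power_add)
  then have "\<epsilon> ^ (m * u) = 1" using e0 by (metis mult_left_cancel)
  then show False using eord u(3) by simp
qed

definition Fpoly :: "complex set \<Rightarrow> complex poly \<Rightarrow> bool" where
  "Fpoly F p \<longleftrightarrow> (\<forall>i. coeff p i \<in> F)"

lemma Fpoly_add: "subfield_C F \<Longrightarrow> Fpoly F p \<Longrightarrow> Fpoly F q \<Longrightarrow> Fpoly F (p + q)"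
  by (simp add: Fpoly_def sf_add)
lemma Fpoly_diff: "subfield_C F \<Longrightarrow> Fpoly F p \<Longrightarrow> Fpoly F q \<Longrightarrow> Fpoly F (p - q)"
  by (simp add: Fpoly_def sf_diff)
lemma Fpoly_smult: "subfield_C F \<Longrightarrow> c \<in> F \<Longrightarrow> Fpoly F p \<Longrightarrow> Fpoly F (smult c p)"
  by (simp add: Fpoly_def sf_mult)
lemma Fpoly_monom: "subfield_C F \<Longrightarrow> c \<in> F \<Longrightarrow> Fpoly F (monom c k)"
  by (simp add: Fpoly_def coeff_monom sf_0)
lemma Fpoly_0: "subfield_C F \<Longrightarrow> Fpoly F 0"
  by (simp add: Fpoly_def sf_0)
lemma Fpoly_mult: "subfield_C F \<Longrightarrow> Fpoly F p \<Longrightarrow> Fpoly F q \<Longrightarrow> Fpoly F (p * q)"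
  unfolding Fpoly_def coeff_mult by (auto intro!: sf_sum sf_mult)
lemma Fpoly_cp: "subfield_C F \<Longrightarrow> Fpoly F (cp p)"
  by (simp add: Fpoly_def sf_of_rat)

lemma Fpoly_divmod:
  assumes F: "subfield_C F" and g: "Fpoly F g" "lead_coeff g = 1"
  shows "Fpoly F p \<Longrightarrow> \<exists>q r. Fpoly F q \<and> Fpoly F r \<and> p = g * q + r \<and> (r = 0 \<or> degree r < degree g)"
proof (induction "degree p" arbitrary: p rule: less_induct)
  case less
  show ?case
  proof (cases "degree p < degree g")
    case True
    then show ?thesis using less.prems Fpoly_0[OF F] by (intro exI[of _ 0] exI[of _ p]) auto
  next
    case False
    define mq where "mq = monom (lead_coeff p) (degree p - degree g)"
    define p' where "p' = p - mq * g"
    have Fmq: "Fpoly F mq" using less.prems unfolding mq_def by (intro Fpoly_monom F) (simp add: Fpoly_def)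
    have Fp': "Fpoly F p'" unfolding p'_def by (intro Fpoly_diff Fpoly_mult F less.prems Fmq g)
    have g0: "g \<noteq> 0" using g by auto
    have dmq: "degree (mq * g) \<le> degree p"
    proof (cases "lead_coeff p = 0")
      case True then show ?thesis by (simp add: mq_def)
    next
      case False
      then have "degree (mq * g) = degree p - degree g + degree g"
        using g0 by (simp add: mq_def degree_mult_eq degree_monom_eq)
      then show ?thesis using \<open>\<not> degree p < degree g\<close> by simp
    qed
    have cdeg: "coeff p' (degree p) = 0"
    proof -
      have dd: "degree p = (degree p - degree g) + degree g" using \<open>\<not> degree p < degree g\<close> by simp
      have "coeff (mq * g) ((degree p - degree g) + degree g) = lead_coeff p * lead_coeff g"
        unfolding mq_def by (simp add: coeff_monom_mult)
      then have "coeff (mq * g) (degree p) = lead_coeff p * lead_coeff g" using dd by simp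
      then show ?thesis using g by (simp add: p'_def)
    qed
    have dp': "degree p' \<le> degree p" unfolding p'_def using dmq by (simp add: degree_diff_le)
    show ?thesis
    proof (cases "p' = 0")
      case True
      then have "p = g * mq + 0" by (simp add: p'_def mult.commute)
      then show ?thesis using Fmq Fpoly_0[OF F] by blast
    next
      case False
      have "degree p' < degree p"
      proof (rule ccontr)
        assume "\<not> degree p' < degree p"
        then have "degree p' = degree p" using dp' by simp
        then have "coeff p' (degree p') = 0" using cdeg by simp
        then show False using False by simp
      qed
      from less.hyps[OF this Fp'] obtain q r where qr: "Fpoly F q" "Fpoly F r" "p' = g * q + r" "r = 0 \<or> degree r < degree g"
        by blast
      have "p = g * (q + mq) + r" using qr(3) by (simp add: p'_def algebra_simps)
      moreover have "Fpoly F (q + mq)" by (intro Fpoly_add F qr(1) Fmq)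
      ultimately show ?thesis using qr by blast
    qed
  qed
qed

lemma of_real_of_rat_c[simp]: "of_real (of_rat r :: real) = (of_rat r :: complex)"
proof -
  obtain a b where r: "r = Rat.Fract a b" "b \<noteq> 0" by (cases r) auto
  then show ?thesis by (simp add: of_rat_rat)
qed

lemma root_unity_cnj:
  fixes z :: complex
  assumes "z ^ n = 1" "n > 0"
  shows "cnj z = z ^ (n - 1)"
proof -
  have "cmod (z ^ n) = 1" using assms by simp
  then have "cmod z ^ n = 1 ^ n" by (simp add: norm_power)
  then have "cmod z = 1" using assms(2) by (intro power_eq_imp_eq_base[of "cmod z" n 1]) auto
  then have "z * cnj z = 1" using complex_norm_square[of z] by simp
  then have i1: "inverse z = cnj z" by (rule inverse_unique)
  have "z ^ Suc (n - 1) = 1" using assms by simp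
  then have "z * z ^ (n - 1) = 1" by simp
  then have "inverse z = z ^ (n - 1)" by (rule inverse_unique)
  then show ?thesis using i1 by simp
qed

lemma Qa_cnj:
  assumes "z ^ n = 1" "n > 0" "x \<in> Qa z"
  shows "cnj x \<in> Qa z"
proof -
  obtain h where "x = poly (cp h) z" using assms(3) by (auto simp: Qa_def)
  then have "cnj x = poly (cp h) (cnj z)" by (simp add: poly_cp_cnj)
  also have "\<dots> = poly (cp (pcompose h (monom 1 (n - 1)))) z"
    using root_unity_cnj[OF assms(1,2)] by (simp add: poly_pcompose poly_monom)
  finally show ?thesis using Qa_poly[of "pcompose h (monom 1 (n - 1))" z] by simp
qed

lemma prod_mset_pow_const:
  "(\<And>x. x \<in># M \<Longrightarrow> (f x :: complex) ^ n = w) \<Longrightarrow> (\<Prod>x\<in>#M. f x) ^ n = w ^ size M"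
  by (induction M) (auto simp: power_mult_distrib)

lemma Fpoly_sum: "subfield_C F \<Longrightarrow> (\<And>i. i \<in> A \<Longrightarrow> Fpoly F (f i)) \<Longrightarrow> Fpoly F (sum f A)"
  by (induction A rule: infinite_finite_induct) (auto intro: Fpoly_add Fpoly_0)

lemma degree_binom: "n > 0 \<Longrightarrow> degree (monom (1::'a::comm_ring_1) n - [:r:]) = n"
proof -
  assume n: "n > 0"
  have ch: "coeff (monom (1::'a) n - [:r:]) i = (if i = n then 1 else 0) - (if i = 0 then r else 0)" for i
    by (cases i) (simp_all add: coeff_monom)
  show ?thesis
  proof (rule order.antisym)
    show "degree (monom (1::'a) n - [:r:]) \<le> n"
    proof (rule degree_le, intro allI impI)
      fix i assume "n < i"
      then show "coeff (monom (1::'a) n - [:r:]) i = 0" using n by (subst ch) simp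
    qed
    show "n \<le> degree (monom (1::'a) n - [:r:])" by (rule le_degree) (use n in \<open>subst ch, simp\<close>)
  qed
qed

lemma a_facts:
  fixes c :: rat and n :: nat
  assumes n0: "n > 0" and c0: "c > 0" and a: "a = complex_of_real (root n (of_rat c))"
  shows "a ^ n = of_rat c" "a \<noteq> 0" "poly (cp (monom 1 n - [:c:])) a = 0" "degree (monom 1 n - [:c:]) = n"
    "root n (of_rat c) > 0" "root n (of_rat c) ^ n = of_rat c"
proof -
  have cr: "(of_rat c :: real) > 0" using c0 by simp
  show r0: "root n (of_rat c) > 0" using real_root_gt_zero[OF n0 cr] .
  show rn: "root n (of_rat c) ^ n = of_rat c" using real_root_pow_pos[OF n0 cr] .
  have "a ^ n = of_real (root n (of_rat c) ^ n)" by (simp add: a)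
  then show an: "a ^ n = of_rat c" using rn by simp
  show "a \<noteq> 0" using r0 a by simp
  show "poly (cp (monom 1 n - [:c:])) a = 0" using an by (simp add: poly_monom)
  show "degree (monom 1 n - [:c:]) = n" using degree_binom[OF n0] .
qed

lemma roots_card_ge_degree:
  fixes P0 :: "rat poly" and \<zeta> :: complex
  assumes zn: "\<zeta> ^ n = 1" and prim: "\<forall>k. 0 < k \<and> k < n \<longrightarrow> \<zeta> ^ k \<noteq> 1" and n0: "n > 0"
    and dv: "P0 dvd (monom 1 n - 1)"
  shows "degree P0 \<le> card {z. poly (cp P0) z = 0}"
proof -
  obtain Q where Q: "monom 1 n - 1 = P0 * Q" using dv by (elim dvdE)
  have Xn0: "(monom (1::rat) n - 1) \<noteq> 0" using root_unity_poly[OF n0] by blast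
  have P00: "P0 \<noteq> 0" and Q0: "Q \<noteq> 0" using Q Xn0 by auto
  have dsum: "n = degree P0 + degree Q"
  proof -
    have "degree (monom (1::rat) n - [:1:]) = n" by (rule degree_binom[OF n0])
    then show ?thesis using Q P00 Q0 by (simp add: degree_mult_eq one_pCons)
  qed
  note pe = prim_root_pow_eq_1[OF zn prim n0]
  have z0: "\<zeta> \<noteq> 0" using zn n0 by (auto simp: power_0_left)
  have inj: "inj_on (\<lambda>j. \<zeta> ^ j) {..<n}"
  proof (rule inj_onI)
    fix i j assume ij: "i \<in> {..<n}" "j \<in> {..<n}" "\<zeta> ^ i = \<zeta> ^ j"
    show "i = j"
    proof (rule ccontr)
      assume "i \<noteq> j"
      then consider "i < j" | "j < i" by linarith
      then show False
      proof cases
        case 1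
        then have "\<zeta> ^ i * \<zeta> ^ (j - i) = \<zeta> ^ j" by (simp flip: power_add)
        then have "\<zeta> ^ i * \<zeta> ^ (j - i) = \<zeta> ^ i * 1" using ij by simp
        then have "\<zeta> ^ (j - i) = 1" using z0 by simp
        then have "n dvd (j - i)" using pe by simp
        then show False using 1 ij by (auto dest: dvd_imp_le)
      next
        case 2
        then have "\<zeta> ^ j * \<zeta> ^ (i - j) = \<zeta> ^ i" by (simp flip: power_add)
        then have "\<zeta> ^ j * \<zeta> ^ (i - j) = \<zeta> ^ j * 1" using ij by simp
        then have "\<zeta> ^ (i - j) = 1" using z0 by simp
        then have "n dvd (i - j)" using pe by simp
        then show False using 2 ij by (auto dest: dvd_imp_le)
      qed
    qed
  qed
  have sub: "(\<lambda>j. \<zeta> ^ j) ` {..<n} \<subseteq> {z. poly (cp P0) z = 0} \<union> {z. poly (cp Q) z = 0}"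
  proof
    fix z assume "z \<in> (\<lambda>j. \<zeta> ^ j) ` {..<n}"
    then obtain j where z: "z = \<zeta> ^ j" by auto
    have "z ^ n = (\<zeta> ^ n) ^ j" by (simp add: z flip: power_mult) (simp add: mult.commute)
    then have "z ^ n = 1" using zn by simp
    then have "poly (cp (monom 1 n - 1)) z = 0" using root_unity_poly[OF n0] by simp
    then have "poly (cp P0) z * poly (cp Q) z = 0" using Q by simp
    then show "z \<in> {z. poly (cp P0) z = 0} \<union> {z. poly (cp Q) z = 0}" by auto
  qed
  have fin1: "finite {z. poly (cp P0) z = 0}" using P00 by (simp add: poly_roots_finite)
  have fin2: "finite {z. poly (cp Q) z = 0}" using Q0 by (simp add: poly_roots_finite)
  have "n = card ((\<lambda>j. \<zeta> ^ j) ` {..<n})" using inj by (simp add: card_image)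
  also have "\<dots> \<le> card ({z. poly (cp P0) z = 0} \<union> {z. poly (cp Q) z = 0})"
    by (rule card_mono) (use fin1 fin2 sub in auto)
  also have "\<dots> \<le> card {z. poly (cp P0) z = 0} + card {z. poly (cp Q) z = 0}" by (rule card_Un_le)
  also have "card {z. poly (cp Q) z = 0} \<le> degree Q"
    using card_poly_roots_bound[of "cp Q"] Q0 by simp
  finally show ?thesis using dsum by linarith
qed

lemma kummer:
  fixes \<zeta> a :: complex and c :: rat and n :: nat
  assumes zn: "\<zeta> ^ n = 1" and prim: "\<forall>k. 0 < k \<and> k < n \<longrightarrow> \<zeta> ^ k \<noteq> 1" and odd: "odd n"
    and c0: "c > 0" and irr: "irreducible (monom 1 n - [:c:])"
    and a: "a = complex_of_real (root n (of_rat c))"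
    and f: "\<And>i. i < n \<Longrightarrow> f i \<in> Qa \<zeta>"
    and s: "(\<Sum>i<n. f i * a ^ i) = 0"
  shows "\<forall>i<n. f i = 0"
proof (rule ccontr)
  assume "\<not> (\<forall>i<n. f i = 0)"
  then obtain i0 where i0: "i0 < n" "f i0 \<noteq> 0" by auto
  have n0: "n > 0" using odd by (simp add: odd_pos)
  define F where "F = Qa \<zeta>"
  define X :: "rat poly" where "X = monom 1 n - [:c:]"
  define ar where "ar = root n (of_rat c :: real)"
  note af = a_facts[OF n0 c0 a]
  have an: "a ^ n = of_rat c" and a0: "a \<noteq> 0" and rootX: "poly (cp X) a = 0" and dX: "degree X = n"
    using af by (simp_all add: X_def)
  have ar0: "ar > 0" and arn: "ar ^ n = of_rat c" using af by (simp_all add: ar_def)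
  have a_ar: "a = of_real ar" by (simp add: a ar_def)
  note mpz = min_poly_root_unity[OF n0 zn]
  have sfF: "subfield_C F" unfolding F_def by (rule Qa_subfield[OF mpz(1) mpz(4)])
  have cnjF: "cnj x \<in> F" if "x \<in> F" for x using Qa_cnj[OF zn n0] that by (simp add: F_def)
  define S where "S = {g. Fpoly F g \<and> g \<noteq> 0 \<and> poly g a = 0}"
  define g0 where "g0 = (\<Sum>i<n. monom (f i) i)"
  have g0S: "g0 \<in> S"
  proof -
    have "Fpoly F g0" unfolding g0_def
      by (intro Fpoly_sum sfF Fpoly_monom) (use f in \<open>auto simp: F_def\<close>)
    moreover have "coeff g0 i0 = f i0" using i0 by (simp add: g0_def coeff_sum coeff_monom)
    then have "g0 \<noteq> 0" using i0 by auto
    moreover have "poly g0 a = 0" using s by (simp add: g0_def poly_sum poly_monom)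
    ultimately show ?thesis by (simp add: S_def)
  qed
  have dg0: "degree g0 < n"
  proof -
    have "degree g0 \<le> n - 1"
      unfolding g0_def by (rule degree_sum_le) (auto intro: order.trans[OF degree_monom_le])
    then show ?thesis using n0 by linarith
  qed
  define d where "d = (LEAST d. \<exists>g\<in>S. degree g = d)"
  have "\<exists>g\<in>S. degree g = d" unfolding d_def by (rule LeastI_ex) (use g0S in blast)
  then obtain g where g: "g \<in> S" "degree g = d" by blast
  have dmin: "d \<le> degree g'" if "g' \<in> S" for g'
    unfolding d_def by (rule Least_le) (use that in blast)
  have dn: "d < n" using dmin[OF g0S] dg0 by simp
  define g1 where "g1 = smult (inverse (lead_coeff g)) g"
  have gS: "Fpoly F g" "g \<noteq> 0" "poly g a = 0" using g by (auto simp: S_def)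
  have lcF: "inverse (lead_coeff g) \<in> F" using gS(1) sfF by (simp add: Fpoly_def sf_inverse)
  have g1: "Fpoly F g1" "lead_coeff g1 = 1" "poly g1 a = 0" "degree g1 = d" "g1 \<noteq> 0"
    using gS g lcF sfF by (auto simp: g1_def Fpoly_smult)
  have d0: "d > 0"
  proof (rule ccontr)
    assume "\<not> d > 0"
    then have "degree g1 = 0" using g1 by simp
    then obtain c1 where c1: "g1 = [:c1:]" by (elim degree_eq_zeroE)
    then have "c1 = 1" using g1(2) by simp
    then show False using g1(3) c1 by simp
  qed
  obtain q r where qr: "Fpoly F q" "Fpoly F r" "cp X = g1 * q + r" "r = 0 \<or> degree r < degree g1"
    using Fpoly_divmod[OF sfF g1(1) g1(2) Fpoly_cp[OF sfF, of X]] by blast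
  have r0: "r = 0"
  proof (rule ccontr)
    assume r0: "r \<noteq> 0"
    have "poly (cp X) a = poly (g1 * q + r) a" using qr(3) by (rule arg_cong)
    then have "poly r a = 0" using rootX g1(3) by simp
    then have "r \<in> S" using r0 qr(2) by (simp add: S_def)
    then have "d \<le> degree r" by (rule dmin)
    moreover have "degree r < d" using qr(4) r0 g1(4) by simp
    ultimately show False by simp
  qed
  then have Xg1: "cp X = g1 * q" using qr(3) by simp
  define M where "M = proots g1"
  have g1M: "g1 = (\<Prod>x\<in>#M. [:-x, 1:])"
    using complex_poly_decompose_multiset[of g1] g1(2) by (simp add: M_def)
  have sM: "size M = d" using size_proots_complex[of g1] g1(4) by (simp add: M_def)
  have Mroots: "x ^ n = of_rat c" if "x \<in># M" for x
  proof -
    have "poly g1 x = 0" using that g1(5) by (simp add: M_def)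
    then have "poly (cp X) x = 0" using Xg1 by simp
    then show ?thesis by (simp add: X_def poly_monom)
  qed
  define \<beta> where "\<beta> = coeff g1 0"
  have \<beta>F: "\<beta> \<in> F" using g1(1) by (simp add: \<beta>_def Fpoly_def)
  have \<beta>_eq: "\<beta> = (\<Prod>x\<in>#M. - x)"
  proof -
    have "\<beta> = poly g1 0" by (simp add: \<beta>_def poly_0_coeff_0)
    also have "\<dots> = (\<Prod>x\<in>#M. poly [:-x, 1:] 0)" by (subst g1M) (simp add: poly_prod_mset)
    finally show ?thesis by simp
  qed
  have \<beta>n: "\<beta> ^ n = (- of_rat c) ^ d"
  proof -
    have "(- x) ^ n = - of_rat c" if "x \<in># M" for x
      using Mroots[OF that] odd by (simp add: power_minus_odd)
    then show ?thesis unfolding \<beta>_eq sM[symmetric] by (rule prod_mset_pow_const)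
  qed
  have norm\<beta>: "cmod \<beta> = ar ^ d"
  proof -
    have "cmod \<beta> ^ n = cmod (\<beta> ^ n)" by (simp add: norm_power)
    also have "\<dots> = (of_rat c) ^ d"
    proof -
      have e1: "(of_rat c :: complex) = of_real (of_rat c)" by (rule of_real_of_rat_c[symmetric])
      have "cmod (of_rat c) = \<bar>of_rat c :: real\<bar>" by (subst e1) (rule norm_of_real)
      then have "cmod (of_rat c) = of_rat c" using c0 by simp
      then show ?thesis using \<beta>n by (simp add: norm_power norm_minus_cancel)
    qed
    also have "\<dots> = (ar ^ n) ^ d" using arn by simp
    also have "\<dots> = (ar ^ d) ^ n" by (simp only: power_mult[symmetric] mult.commute)
    finally have "cmod \<beta> ^ n = (ar ^ d) ^ n" .
    moreover have "0 \<le> ar ^ d" using ar0 by simp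
    ultimately show ?thesis using n0 by (intro power_eq_imp_eq_base[of "cmod \<beta>" n "ar ^ d"]) simp_all
  qed
  have a2d: "a ^ (2 * d) \<in> F"
  proof -
    have "\<beta> * cnj \<beta> = of_real ((cmod \<beta>)\<^sup>2)" by (rule complex_norm_square[symmetric])
    also have "\<dots> = a ^ (2 * d)" by (simp add: norm\<beta> a_ar power_mult mult.commute)
    finally show ?thesis using sf_mult[OF sfF \<beta>F cnjF[OF \<beta>F]] by simp
  qed
  have anF: "a ^ n \<in> F" using an sf_of_rat[OF sfF] by simp
  define e where "e = gcd (2 * d) n"
  have d2: "2 * d \<noteq> 0" using d0 by simp
  obtain x y where xy: "(2 * d) * x = n * y + e" using bezout_nat[OF d2, of n] by (auto simp: e_def)
  have aeF: "a ^ e \<in> F"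
  proof -
    have "(a ^ (2 * d)) ^ x = (a ^ n) ^ y * a ^ e" by (simp flip: power_mult power_add add: xy)
    then have "a ^ e = (a ^ (2 * d)) ^ x * inverse ((a ^ n) ^ y)" using a0 by (simp add: field_simps)
    then show ?thesis using sfF a2d anF by (simp add: sf_mult sf_inverse sf_power)
  qed
  have en: "e dvd n" by (simp add: e_def)
  have eodd: "odd e"
  proof
    assume "even e"
    then have "even n" using en by (rule dvd_trans)
    then show False using odd by simp
  qed
  have ed: "e dvd d"
  proof -
    have "e dvd 2 * d" by (simp add: e_def)
    moreover have "coprime e 2" using eodd by simp
    ultimately show ?thesis by (simp add: coprime_dvd_mult_right_iff)
  qed
  have e0: "e > 0" using n0 by (simp add: e_def)
  have "e \<le> d" using ed d0 by (rule dvd_imp_le)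
  then have e_lt: "e < n" using dn by simp
  define k where "k = n div e"
  have nek: "n = e * k" using en by (simp add: k_def)
  have k1: "k > 1" using nek e_lt n0 by (cases k) auto
  have kodd: "odd k" using nek odd by simp
  define b where "b = a ^ e"
  have bF: "b \<in> F" using aeF by (simp add: b_def)
  have b_real: "b = of_real (ar ^ e)" by (simp add: b_def a_ar)
  have bk: "(ar ^ e) ^ k = of_rat c" using arn by (simp flip: power_mult add: nek)
  have b_root: "root k (of_rat c) = ar ^ e" using odd_real_root_unique[OF kodd bk] .
  have "b ^ k = of_real ((ar ^ e) ^ k)" by (simp only: b_real of_real_power)
  then have bkc: "b ^ k = of_rat c" using bk by simp
  obtain hb where hb: "b = poly (cp hb) \<zeta>" using bF by (auto simp: F_def Qa_def)
  define P0 where "P0 = min_poly \<zeta>"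
  have P00: "P0 \<noteq> 0" using mpz(1) by (auto simp: P0_def)
  define h' where "h' = hb mod P0"
  have h'ev: "poly (cp h') \<zeta> = b"
  proof -
    have "hb = P0 * (hb div P0) + h'" by (simp add: h'_def)
    then have "poly (cp hb) \<zeta> = poly (cp (P0 * (hb div P0) + h')) \<zeta>" by simp
    then show ?thesis using mpz(4) hb by (simp add: P0_def)
  qed
  have dh': "h' = 0 \<or> degree h' < degree P0" using degree_mod_less[of P0 hb] P00 by (auto simp: h'_def)
  have key: "poly (cp h') z = b" if z: "poly (cp P0) z = 0" for z
  proof -
    have zn': "z ^ n = 1"
    proof -
      obtain k' where "monom 1 n - 1 = P0 * k'" using mpz(3) by (auto simp: P0_def elim: dvdE)
      then have "poly (cp (monom 1 n - 1)) z = 0" using z by simp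
      then show ?thesis using root_unity_poly[OF n0] by simp
    qed
    have R1: "poly (cp (h' ^ k - [:c:])) z = 0"
    proof -
      have "poly (cp (h' ^ k - [:c:])) \<zeta> = 0" using h'ev bkc by simp
      then have "P0 dvd (h' ^ k - [:c:])" using irr_root_dvd[OF mpz(1) mpz(4), of "h' ^ k - [:c:]"] unfolding P0_def by blast
      then show ?thesis using irr_root_dvd[OF mpz(1)[folded P0_def] z] by blast
    qed
    have R2: "poly (cp (h' - pcompose h' (monom 1 (n - 1)))) z = 0"
    proof -
      have "poly (cp (h' - pcompose h' (monom 1 (n - 1)))) \<zeta> = b - poly (cp h') (cnj \<zeta>)"
        using h'ev root_unity_cnj[OF zn n0] by (simp add: poly_pcompose poly_monom)
      also have "poly (cp h') (cnj \<zeta>) = cnj b" using h'ev by (simp add: poly_cp_cnj)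
      also have "cnj b = b" using b_real by simp
      finally have "poly (cp (h' - pcompose h' (monom 1 (n - 1)))) \<zeta> = 0" by simp
      then have "P0 dvd (h' - pcompose h' (monom 1 (n - 1)))"
        using irr_root_dvd[OF mpz(1) mpz(4), of "h' - pcompose h' (monom 1 (n - 1))"] unfolding P0_def by blast
      then show ?thesis using irr_root_dvd[OF mpz(1)[folded P0_def] z] by blast
    qed
    define w where "w = poly (cp h') z"
    have wk: "w ^ k = of_rat c" using R1 by (simp add: w_def)
    have "w = poly (cp h') (z ^ (n - 1))" using R2 by (simp add: w_def poly_pcompose poly_monom)
    also have "\<dots> = poly (cp h') (cnj z)" using root_unity_cnj[OF zn' n0] by simp
    also have "\<dots> = cnj w" by (simp add: w_def poly_cp_cnj)
    finally have "w = cnj w" .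
    then have "Im w = Im (cnj w)" by (rule arg_cong)
    then have "Im w = 0" by simp
    then have wr: "w = of_real (Re w)" by (simp add: complex_eq_iff)
    have "of_real ((Re w) ^ k) = (of_real (Re w) ^ k :: complex)" by (rule of_real_power)
    also have "\<dots> = of_rat c" using wk wr by simp
    also have "\<dots> = of_real (of_rat c :: real)" by simp
    finally have "of_real ((Re w) ^ k) = (of_real (of_rat c :: real) :: complex)" .
    then have "(Re w) ^ k = of_rat c" by (simp only: of_real_eq_iff)
    then have "root k (of_rat c) = Re w" using odd_real_root_unique[OF kodd] by blast
    then have "Re w = ar ^ e" using b_root by simp
    then show ?thesis using wr b_real by (simp add: w_def)
  qed
  have dP0: "degree P0 > 0" using irreducible_degree_pos[OF mpz(1)] by (simp add: P0_def)
  have Dz: "cp h' - [:b:] = 0"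
  proof (rule ccontr)
    assume D0: "cp h' - [:b:] \<noteq> 0"
    have "degree (cp h' - [:b:]) \<le> max (degree (cp h')) (degree [:b:])" by (rule degree_diff_le_max)
    then have dD: "degree (cp h' - [:b:]) < degree P0" using dh' dP0 by auto
    have "{z. poly (cp P0) z = 0} \<subseteq> {z. poly (cp h' - [:b:]) z = 0}" using key by auto
    then have "card {z. poly (cp P0) z = 0} \<le> card {z. poly (cp h' - [:b:]) z = 0}"
      by (rule card_mono[OF poly_roots_finite[OF D0]])
    also have "\<dots> \<le> degree (cp h' - [:b:])" by (rule card_poly_roots_bound[OF D0])
    finally show False
      using dD roots_card_ge_degree[OF zn prim n0 mpz(3)[folded P0_def]] by simp
  qed
  then have "coeff (cp h' - [:b:]) 0 = 0" by simp
  then have brat: "b = of_rat (coeff h' 0)" by simp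
  define Y :: "rat poly" where "Y = monom 1 e - [:coeff h' 0:]"
  have dY: "degree Y = e" using degree_binom[OF e0] by (simp add: Y_def)
  have Y0: "Y \<noteq> 0" using dY e0 by auto
  have "poly (cp Y) a = 0" using brat by (simp add: Y_def poly_monom b_def)
  then have "X dvd Y" using irr_root_dvd[OF irr[folded X_def] rootX] by blast
  then have "degree X \<le> degree Y" using Y0 by (simp add: dvd_imp_degree_le)
  then show False using dX dY e_lt by simp
qed

lemma Qa_add: "x \<in> Qa \<alpha> \<Longrightarrow> y \<in> Qa \<alpha> \<Longrightarrow> x + y \<in> Qa \<alpha>"
proof -
  assume "x \<in> Qa \<alpha>" "y \<in> Qa \<alpha>"
  then obtain p q where "x = poly (cp p) \<alpha>" "y = poly (cp q) \<alpha>" by (auto simp: Qa_def)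
  moreover have "poly (cp (p + q)) \<alpha> \<in> Qa \<alpha>" by (rule Qa_poly)
  ultimately show ?thesis by simp
qed
lemma Qa_mult: "x \<in> Qa \<alpha> \<Longrightarrow> y \<in> Qa \<alpha> \<Longrightarrow> x * y \<in> Qa \<alpha>"
proof -
  assume "x \<in> Qa \<alpha>" "y \<in> Qa \<alpha>"
  then obtain p q where "x = poly (cp p) \<alpha>" "y = poly (cp q) \<alpha>" by (auto simp: Qa_def)
  moreover have "poly (cp (p * q)) \<alpha> \<in> Qa \<alpha>" by (rule Qa_poly)
  ultimately show ?thesis by simp
qed
lemma Qa_diff: "x \<in> Qa \<alpha> \<Longrightarrow> y \<in> Qa \<alpha> \<Longrightarrow> x - y \<in> Qa \<alpha>"
proof -
  assume "x \<in> Qa \<alpha>" "y \<in> Qa \<alpha>"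
  then obtain p q where "x = poly (cp p) \<alpha>" "y = poly (cp q) \<alpha>" by (auto simp: Qa_def)
  moreover have "poly (cp (p - q)) \<alpha> \<in> Qa \<alpha>" by (rule Qa_poly)
  ultimately show ?thesis by simp
qed
lemma Qa_sum: "(\<And>i. i \<in> A \<Longrightarrow> f i \<in> Qa \<alpha>) \<Longrightarrow> sum f A \<in> Qa \<alpha>"
  by (induction A rule: infinite_finite_induct) (auto intro: Qa_add simp: Qa_of_rat[of 0, simplified])
lemma Qa_pow_sub: "x \<in> Qa (\<alpha> ^ k) \<Longrightarrow> x \<in> Qa \<alpha>"
proof -
  assume "x \<in> Qa (\<alpha> ^ k)"
  then obtain p where "x = poly (cp p) (\<alpha> ^ k)" by (auto simp: Qa_def)
  moreover have "poly (cp (pcompose p (monom 1 k))) \<alpha> \<in> Qa \<alpha>" by (rule Qa_poly)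
  ultimately show ?thesis by (simp add: poly_pcompose poly_monom)
qed

lemma Qa_coeffs:
  assumes X0: "X \<noteq> 0" and root: "poly (cp X) \<alpha> = 0" and x: "x \<in> Qa \<alpha>"
  shows "\<exists>q. x = (\<Sum>i<degree X. of_rat (q i) * \<alpha> ^ i)"
proof -
  obtain p where xp: "x = poly (cp p) \<alpha>" using x by (auto simp: Qa_def)
  define r where "r = p mod X"
  have "p = X * (p div X) + r" by (simp add: r_def)
  then have "poly (cp p) \<alpha> = poly (cp (X * (p div X) + r)) \<alpha>" by simp
  then have "poly (cp p) \<alpha> = poly (cp r) \<alpha>" using root by simp
  also have "\<dots> = (\<Sum>i<degree X. of_rat (coeff r i) * \<alpha> ^ i)"
  proof -
    have "degree (cp r) < degree X \<or> cp r = 0"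
      using degree_mod_less[of X p] X0 by (auto simp: r_def)
    then show ?thesis by (subst poly_as_sum_lt) auto
  qed
  finally show ?thesis using xp by blast
qed

lemma prim_inj:
  fixes \<zeta> :: complex
  assumes zn: "\<zeta> ^ n = 1" and prim: "\<forall>k. 0 < k \<and> k < n \<longrightarrow> \<zeta> ^ k \<noteq> 1" and n0: "n > 0"
  shows "inj_on (\<lambda>j. \<zeta> ^ j) {..<n}"
proof (rule inj_onI)
  note pe = prim_root_pow_eq_1[OF zn prim n0]
  have z0: "\<zeta> \<noteq> 0" using zn n0 by (auto simp: power_0_left)
  have *: "i = j" if ij: "i < n" "j < n" "\<zeta> ^ i = \<zeta> ^ j" "i \<le> j" for i j
  proof -
    have "\<zeta> ^ i * \<zeta> ^ (j - i) = \<zeta> ^ j" using ij(4) by (simp flip: power_add)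
    then have "\<zeta> ^ i * \<zeta> ^ (j - i) = \<zeta> ^ i * 1" using ij by simp
    then have "\<zeta> ^ (j - i) = 1" using z0 by simp
    then have "n dvd (j - i)" using pe by simp
    then show ?thesis using ij by (cases "j - i = 0") (auto dest: dvd_imp_le)
  qed
  fix i j assume "i \<in> {..<n}" "j \<in> {..<n}" "\<zeta> ^ i = \<zeta> ^ j"
  then show "i = j" using *[of i j] *[of j i] by (cases "i \<le> j") auto
qed

lemma roots_of_unity_all:
  fixes \<zeta> z :: complex
  assumes zn: "\<zeta> ^ n = 1" and prim: "\<forall>k. 0 < k \<and> k < n \<longrightarrow> \<zeta> ^ k \<noteq> 1" and n0: "n > 0"
    and z: "z ^ n = 1"
  shows "\<exists>k<n. z = \<zeta> ^ k"
proof -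
  define p :: "complex poly" where "p = cp (monom 1 n - 1)"
  have p0: "p \<noteq> 0" using root_unity_poly[OF n0, of 0] cp_eq_0_iff[of "monom 1 n - 1"] unfolding p_def by blast
  have ev: "poly p w = w ^ n - 1" for w using root_unity_poly[OF n0] by (simp add: p_def)
  have "degree (monom (1::rat) n - [:1:]) = n" by (rule degree_binom[OF n0])
  then have dp: "degree p = n" unfolding p_def degree_cp by (simp add: one_pCons)
  have sub: "(\<lambda>j. \<zeta> ^ j) ` {..<n} \<subseteq> {w. poly p w = 0}"
  proof
    fix w assume "w \<in> (\<lambda>j. \<zeta> ^ j) ` {..<n}"
    then obtain j where w: "w = \<zeta> ^ j" by auto
    have "w ^ n = (\<zeta> ^ n) ^ j" by (simp add: w flip: power_mult) (simp add: mult.commute)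
    then show "w \<in> {w. poly p w = 0}" using zn ev by simp
  qed
  have card1: "card ((\<lambda>j. \<zeta> ^ j) ` {..<n}) = n" using prim_inj[OF zn prim n0] by (simp add: card_image)
  have card2: "card {w. poly p w = 0} \<le> n" using card_poly_roots_bound[OF p0] dp by simp
  have "(\<lambda>j. \<zeta> ^ j) ` {..<n} = {w. poly p w = 0}"
    by (rule card_subset_eq[OF poly_roots_finite[OF p0] sub]) (use card1 card2 card_mono[OF poly_roots_finite[OF p0] sub] in simp)
  moreover have "z \<in> {w. poly p w = 0}" using z ev by simp
  ultimately show ?thesis by auto
qed

locale kset =
  fixes n l :: nat and \<zeta> :: complex and c :: rat and a :: complex
  assumes odd: "odd n" and n2: "n > 2" and zn: "\<zeta> ^ n = 1"
    and prim: "\<forall>k. 0 < k \<and> k < n \<longrightarrow> \<zeta> ^ k \<noteq> 1"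
    and c0: "c > 0" and irr: "irreducible (monom 1 n - [:c:])" and l0: "l > 0" and ldvd: "l dvd n"
    and a_def: "a = complex_of_real (root n (of_rat c))"
begin

definition m where "m = n div l"
definition \<omega> where "\<omega> = \<zeta> ^ l"
definition X :: "rat poly" where "X = monom 1 n - [:c:]"

lemma n0: "n > 0" using n2 by simp
lemma nlm: "n = l * m" using ldvd by (simp add: m_def)
lemma m0: "m > 0" using nlm n0 by (cases m) auto
lemma m_odd: "odd m"
proof -
  have "odd (l * m)" using nlm odd by simp
  then show ?thesis by simp
qed
lemma z0: "\<zeta> \<noteq> 0" using zn n0 by (auto simp: power_0_left)

lemma af: "a ^ n = of_rat c" "a \<noteq> 0" "poly (cp X) a = 0" "degree X = n"
  using a_facts[OF n0 c0 a_def] by (simp_all add: X_def)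

lemma irrX: "irreducible X" using irr by (simp add: X_def)
lemma X0: "X \<noteq> 0" using irrX by auto

lemma wm: "\<omega> ^ m = 1" by (simp add: \<omega>_def power_mult[symmetric] nlm[symmetric] zn)

lemma w_pow_n: "(\<omega> ^ j) ^ n = 1"
proof -
  have e: "j * n = m * (l * j)" using nlm by (simp add: mult_ac)
  have "(\<omega> ^ j) ^ n = \<omega> ^ (j * n)" by (simp only: power_mult)
  also have "\<dots> = (\<omega> ^ m) ^ (l * j)" by (simp only: e power_mult)
  finally show ?thesis using wm by simp
qed

lemma rootX_iff: "poly (cp X) x = 0 \<longleftrightarrow> x ^ n = of_rat c"
  by (simp add: X_def poly_monom)

lemma roots_X: "x ^ n = of_rat c \<Longrightarrow> \<exists>k<n. x = a * \<zeta> ^ k"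
proof -
  assume x: "x ^ n = of_rat c"
  have "(x / a) ^ n = 1" using x af c0 by (simp add: power_divide)
  then obtain k where "k < n" "x / a = \<zeta> ^ k" using roots_of_unity_all[OF zn prim n0] by blast
  then show ?thesis using af(2) by (intro exI[of _ k]) (auto simp: field_simps)
qed

lemma conj_root: "(a * \<omega> ^ j) ^ n = of_rat c"
  using af w_pow_n by (simp add: power_mult_distrib)

lemma Qa_conj_subfield: "subfield_C (Qa (a * \<omega> ^ j))"
  by (rule Qa_subfield[OF irrX]) (simp add: rootX_iff conj_root)

lemma gen_field_conj: "gen_field {a * \<omega> ^ j} = Qa (a * \<omega> ^ j)"
  by (rule gen_field_single[OF irrX]) (simp add: rootX_iff conj_root)

lemma L_eq: "gen_field {a} = Qa a"
  using gen_field_conj[of 0] by simp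

lemma ext_degree_L: "ext_degree (gen_field {a}) = n"
  using ext_degree_Qa[OF irrX af(3)] af(4) L_eq by simp

lemma Qa_a_coeffs: "x \<in> Qa \<beta> \<Longrightarrow> \<beta> ^ n = of_rat c \<Longrightarrow> \<exists>q. x = (\<Sum>i<n. of_rat (q i) * \<beta> ^ i)"
  using Qa_coeffs[OF X0, of \<beta> x] af(4) by (simp add: rootX_iff)

subsection \<open>The field M\<close>

definition BM where "BM = (\<lambda>(i, j). a ^ i * \<omega> ^ j) ` ({..<n} \<times> {..<m})"

lemma a_pow_reduce: "a ^ k = of_rat (c ^ (k div n)) * a ^ (k mod n)"
proof -
  have "a ^ k = (a ^ n) ^ (k div n) * a ^ (k mod n)"
    by (simp add: power_mult[symmetric] power_add[symmetric])
  then show ?thesis using af(1) by (simp add: of_rat_power)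
qed

lemma w_pow_reduce: "\<omega> ^ k = \<omega> ^ (k mod m)"
proof -
  have "\<omega> ^ k = (\<omega> ^ m) ^ (k div m) * \<omega> ^ (k mod m)"
    by (simp add: power_mult[symmetric] power_add[symmetric])
  then show ?thesis using wm by simp
qed

lemma BM_mult: "b \<in> BM \<Longrightarrow> b' \<in> BM \<Longrightarrow> b * b' \<in> Q.span BM"
proof -
  assume "b \<in> BM" "b' \<in> BM"
  then obtain i j i' j' where b: "b = a ^ i * \<omega> ^ j" and b': "b' = a ^ i' * \<omega> ^ j'"
    by (auto simp: BM_def)
  have "b * b' = a ^ (i + i') * \<omega> ^ (j + j')" by (simp add: b b' power_add)
  also have "\<dots> = of_rat (c ^ ((i + i') div n)) * (a ^ ((i + i') mod n) * \<omega> ^ ((j + j') mod m))"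
    by (subst a_pow_reduce, subst w_pow_reduce) simp
  also have "\<dots> \<in> Q.span BM"
    by (intro Q.span_scale Q.span_base) (use n0 m0 in \<open>auto simp: BM_def\<close>)
  finally show ?thesis .
qed

lemma one_BM: "1 \<in> Q.span BM"
  by (rule Q.span_base) (use n0 m0 in \<open>force simp: BM_def\<close>)

lemma M_sub: "gen_field {a, \<zeta> ^ l} \<subseteq> Q.span BM"
proof (rule gen_field_least)
  show "subfield_C (Q.span BM)"
    by (rule span_subfield[OF _ one_BM BM_mult]) (simp add: BM_def)
  have "a \<in> BM" using n2 m0 by (force simp: BM_def intro!: image_eqI[where x="(1,0)"])
  moreover have "\<zeta> ^ l \<in> BM"
  proof -
    have "\<zeta> ^ l = (\<lambda>(i, j). a ^ i * \<omega> ^ j) (0, 1 mod m)" using w_pow_reduce[of 1] by (simp add: \<omega>_def)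
    moreover have "(0, 1 mod m) \<in> {..<n} \<times> {..<m}" using n0 m0 by simp
    ultimately show ?thesis unfolding BM_def by (rule image_eqI)
  qed
  ultimately show "{a, \<zeta> ^ l} \<subseteq> Q.span BM" using Q.span_base by blast
qed


lemma span_BM_repr:
  assumes x: "x \<in> Q.span BM"
  shows "\<exists>f. (\<forall>i<n. f i \<in> Qa \<omega>) \<and> x = (\<Sum>i<n. f i * a ^ i)"
  using x
proof (induction rule: Q.span_induct_alt)
  case base
  then show ?case by (intro exI[of _ "\<lambda>_. 0"]) (simp add: Qa_of_rat[of 0, simplified])
next
  case (step q b y)
  obtain f where f: "\<forall>i<n. f i \<in> Qa \<omega>" "y = (\<Sum>i<n. f i * a ^ i)" using step by blast
  obtain i0 j0 where b: "b = a ^ i0 * \<omega> ^ j0" "i0 < n" using step(1) by (auto simp: BM_def)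
  define f' where "f' = (\<lambda>i. f i + (if i = i0 then of_rat q * \<omega> ^ j0 else 0))"
  have "\<forall>i<n. f' i \<in> Qa \<omega>"
    using f(1) by (auto simp: f'_def intro!: Qa_add Qa_mult Qa_of_rat Qa_power)
  moreover have "of_rat q * b + y = (\<Sum>i<n. f' i * a ^ i)"
  proof -
    have "(\<Sum>i<n. f' i * a ^ i) = (\<Sum>i<n. f i * a ^ i) + (\<Sum>i<n. (if i = i0 then of_rat q * \<omega> ^ j0 else 0) * a ^ i)"
      by (simp add: f'_def algebra_simps sum.distrib)
    also have "(\<Sum>i<n. (if i = i0 then of_rat q * \<omega> ^ j0 else 0) * a ^ i)
        = (\<Sum>i<n. if i = i0 then of_rat q * \<omega> ^ j0 * a ^ i else 0)"
      by (rule sum.cong) auto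
    also have "\<dots> = of_rat q * \<omega> ^ j0 * a ^ i0" using b(2) by simp
    finally show ?thesis using f(2) b(1) by (simp add: mult_ac)
  qed
  ultimately show ?case by blast
qed

lemma Qa_w_sub: "x \<in> Qa \<omega> \<Longrightarrow> x \<in> Qa \<zeta>"
  unfolding \<omega>_def by (rule Qa_pow_sub)

lemma M_subfield: "subfield_C (gen_field {a, \<zeta> ^ l})" by (rule gen_field_subfield)

lemma a_in_M: "a \<in> gen_field {a, \<zeta> ^ l}" and w_in_M: "\<omega> \<in> gen_field {a, \<zeta> ^ l}"
  using gen_field_sub[of "{a, \<zeta> ^ l}"] by (auto simp: \<omega>_def)

lemma conj_in_M: "a * \<omega> ^ j \<in> gen_field {a, \<zeta> ^ l}"
  by (intro sf_mult[OF M_subfield] a_in_M sf_power[OF M_subfield] w_in_M)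

lemma aroot_in_M:
  assumes "a * \<zeta> ^ k \<in> gen_field {a, \<zeta> ^ l}"
  shows "l dvd k"
proof -
  have "a * \<zeta> ^ k \<in> Q.span BM" using assms M_sub by blast
  then obtain f where f: "\<forall>i<n. f i \<in> Qa \<omega>" "a * \<zeta> ^ k = (\<Sum>i<n. f i * a ^ i)"
    using span_BM_repr by blast
  define g where "g = (\<lambda>i. f i - (if i = 1 then \<zeta> ^ k else 0))"
  have zk: "\<zeta> ^ k \<in> Qa \<zeta>" by (rule Qa_power)
  have gF: "g i \<in> Qa \<zeta>" if "i < n" for i
  proof -
    have "f i \<in> Qa \<zeta>" by (rule Qa_w_sub) (use f(1) that in blast)
    moreover have "(if i = 1 then \<zeta> ^ k else 0) \<in> Qa \<zeta>" using zk Qa_of_rat[of 0 \<zeta>] by auto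
    ultimately show ?thesis unfolding g_def by (rule Qa_diff)
  qed
  have "(\<Sum>i<n. g i * a ^ i) = (\<Sum>i<n. f i * a ^ i) - (\<Sum>i<n. (if i = 1 then \<zeta> ^ k else 0) * a ^ i)"
    by (simp add: g_def algebra_simps sum_subtractf)
  also have "(\<Sum>i<n. (if i = 1 then \<zeta> ^ k else 0) * a ^ i) = (\<Sum>i<n. if i = 1 then \<zeta> ^ k * a ^ i else 0)"
    by (rule sum.cong) auto
  also have "\<dots> = \<zeta> ^ k * a" using n2 by simp
  finally have "(\<Sum>i<n. g i * a ^ i) = 0" using f(2) by (simp add: mult.commute)
  then have "\<forall>i<n. g i = 0" using kummer[OF zn prim odd c0 irr a_def, of g, OF gF] by blast
  then have "g 1 = 0" using n2 by simp
  then have "f 1 = \<zeta> ^ k" by (simp add: g_def)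
  moreover have "f 1 \<in> Qa \<omega>" using f(1) n2 by simp
  ultimately have "\<zeta> ^ k \<in> Qa (\<zeta> ^ l)" by (simp add: \<omega>_def)
  then obtain h where "\<zeta> ^ k = poly (cp h) (\<zeta> ^ l)" by (auto simp: Qa_def)
  then show ?thesis using cyclo_no_extra[OF zn prim odd l0 ldvd] by blast
qed

lemma roots_in_M: "{x \<in> gen_field {a, \<zeta> ^ l}. x ^ n = of_rat c} = (\<lambda>j. a * \<omega> ^ j) ` {..<m}"
proof
  show "{x \<in> gen_field {a, \<zeta> ^ l}. x ^ n = of_rat c} \<subseteq> (\<lambda>j. a * \<omega> ^ j) ` {..<m}"
  proof
    fix x assume x: "x \<in> {x \<in> gen_field {a, \<zeta> ^ l}. x ^ n = of_rat c}"
    then obtain k where k: "k < n" "x = a * \<zeta> ^ k" using roots_X by auto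
    then have "l dvd k" using x aroot_in_M by auto
    then obtain j where j: "k = l * j" by (elim dvdE)
    have "l * j < l * m" using k(1) j nlm by simp
    then have "j < m" using l0 by simp
    moreover have "x = a * \<omega> ^ j" using k j by (simp add: \<omega>_def power_mult)
    ultimately show "x \<in> (\<lambda>j. a * \<omega> ^ j) ` {..<m}" by auto
  qed
  show "(\<lambda>j. a * \<omega> ^ j) ` {..<m} \<subseteq> {x \<in> gen_field {a, \<zeta> ^ l}. x ^ n = of_rat c}"
    using conj_in_M conj_root by auto
qed

lemma inj_conj: "inj_on (\<lambda>j. a * \<omega> ^ j) {..<m}"
proof (rule inj_onI)
  fix i j assume ij: "i \<in> {..<m}" "j \<in> {..<m}" "a * \<omega> ^ i = a * \<omega> ^ j"
  then have "\<zeta> ^ (l * i) = \<zeta> ^ (l * j)" using af(2) by (simp add: \<omega>_def power_mult)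
  moreover have "l * i < l * m" "l * j < l * m" using ij(1,2) l0 by simp_all
  then have "l * i < n" "l * j < n" using nlm by simp_all
  ultimately have "l * i = l * j" using prim_inj[OF zn prim n0] by (auto dest: inj_onD)
  then show "i = j" using l0 by simp
qed

lemma card_roots_M: "card {x \<in> gen_field {a, \<zeta> ^ l}. x ^ n = of_rat c} = m"
  using inj_conj by (simp add: roots_in_M card_image)

end

context kset
begin

lemma powers_mult: "b \<in> (\<lambda>i. a ^ i) ` {..<n} \<Longrightarrow> b' \<in> (\<lambda>i. a ^ i) ` {..<n} \<Longrightarrow> b * b' \<in> Q.span ((\<lambda>i. a ^ i) ` {..<n})"
proof -
  assume "b \<in> (\<lambda>i. a ^ i) ` {..<n}" "b' \<in> (\<lambda>i. a ^ i) ` {..<n}"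
  then obtain i j where b: "b = a ^ i" "b' = a ^ j" by auto
  have "b * b' = of_rat (c ^ ((i + j) div n)) * a ^ ((i + j) mod n)"
    by (simp add: b power_add[symmetric] a_pow_reduce[of "i + j"])
  also have "\<dots> \<in> Q.span ((\<lambda>i. a ^ i) ` {..<n})"
    by (intro Q.span_scale Q.span_base) (use n0 in auto)
  finally show ?thesis .
qed

lemma L_span: "gen_field {a} = Q.span ((\<lambda>i. a ^ i) ` {..<n})"
  using L_eq Qa_span[OF X0 af(3)] af(4) by simp

lemma L_algebraic: "x \<in> gen_field {a} \<Longrightarrow> \<exists>p. p \<noteq> 0 \<and> poly (cp p) x = 0"
  unfolding L_span
  by (rule algebraic_in_span[OF _ _ powers_mult]) (use n0 in \<open>auto intro!: Q.span_base image_eqI[where x=0]\<close>)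

lemma root_capacity_eq: "root_capacity (gen_field {a, \<zeta> ^ l}) (gen_field {a}) = m"
proof -
  define L where "L = gen_field {a}"
  define M where "M = gen_field {a, \<zeta> ^ l}"
  define \<alpha>0 where "\<alpha>0 = (SOME \<alpha>. L = gen_field {\<alpha>})"
  have L\<alpha>: "L = gen_field {\<alpha>0}" unfolding \<alpha>0_def by (rule someI[of _ a]) (simp add: L_def)
  have \<alpha>0L: "\<alpha>0 \<in> L" using L\<alpha> gen_field_sub by blast
  obtain p where p: "p \<noteq> 0" "poly (cp p) \<alpha>0 = 0" using L_algebraic \<alpha>0L by (auto simp: L_def)
  define P where "P = min_poly \<alpha>0"
  have irrP: "irreducible P" unfolding P_def by (rule min_poly_irreducible[OF p])
  have rootP: "poly (cp P) \<alpha>0 = 0" unfolding P_def by (rule min_poly_props(3)[OF p])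
  have LQ: "L = Qa \<alpha>0" using L\<alpha> gen_field_single[OF irrP rootP] by simp
  have LQa: "L = Qa a" by (simp add: L_def L_eq)
  obtain w where w: "a = poly (cp w) \<alpha>0" using LQ LQa Qa_gen[of a] by (auto simp: Qa_def)
  obtain u where u: "\<alpha>0 = poly (cp u) a" using LQa \<alpha>0L by (auto simp: Qa_def)
  have Pdvd: "poly (cp q) x = 0" if "poly (cp q) \<alpha>0 = 0" "poly (cp P) x = 0" for q x
  proof -
    have "P dvd q" using irr_root_dvd[OF irrP rootP] that(1) by blast
    then show ?thesis using irr_root_dvd[OF irrP that(2)] by blast
  qed
  have Xdvd: "poly (cp q) y = 0" if "poly (cp q) a = 0" "y ^ n = of_rat c" for q y
  proof -
    have "X dvd q" using irr_root_dvd[OF irrX af(3)] that(1) by blast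
    moreover have "poly (cp X) y = 0" using that(2) by (simp add: rootX_iff)
    ultimately show ?thesis using irr_root_dvd[OF irrX] by blast
  qed
  have Msf: "subfield_C M" by (simp add: M_def M_subfield)
  define R where "R = {x \<in> M. poly (cp P) x = 0}"
  define T where "T = {x \<in> M. x ^ n = of_rat c}"
  have bij: "bij_betw (\<lambda>x. poly (cp w) x) R T"
  proof (rule bij_betw_byWitness[where f'="\<lambda>y. poly (cp u) y"])
    show "\<forall>x\<in>R. poly (cp u) (poly (cp w) x) = x"
    proof
      fix x assume x: "x \<in> R"
      have "poly (cp (pcompose u w - [:0,1:])) \<alpha>0 = 0" using w u by (simp add: poly_pcompose)
      then have "poly (cp (pcompose u w - [:0,1:])) x = 0" by (rule Pdvd) (use x in \<open>simp add: R_def\<close>)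
      then show "poly (cp u) (poly (cp w) x) = x" by (simp add: poly_pcompose)
    qed
    show "\<forall>y\<in>T. poly (cp w) (poly (cp u) y) = y"
    proof
      fix y assume y: "y \<in> T"
      have "poly (cp (pcompose w u - [:0,1:])) a = 0" using w u by (simp add: poly_pcompose)
      then have "poly (cp (pcompose w u - [:0,1:])) y = 0" by (rule Xdvd) (use y in \<open>simp add: T_def\<close>)
      then show "poly (cp w) (poly (cp u) y) = y" by (simp add: poly_pcompose)
    qed
    show "(\<lambda>x. poly (cp w) x) ` R \<subseteq> T"
    proof
      fix z assume "z \<in> (\<lambda>x. poly (cp w) x) ` R"
      then obtain x where x: "x \<in> R" "z = poly (cp w) x" by auto
      have "poly (cp (w ^ n - [:c:])) \<alpha>0 = 0" using w af(1) by simp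
      then have "poly (cp (w ^ n - [:c:])) x = 0" by (rule Pdvd) (use x in \<open>simp add: R_def\<close>)
      then have "z ^ n = of_rat c" using x by simp
      moreover have "z \<in> M" using x sf_poly[OF Msf] by (simp add: R_def)
      ultimately show "z \<in> T" by (simp add: T_def)
    qed
    show "(\<lambda>y. poly (cp u) y) ` T \<subseteq> R"
    proof
      fix z assume "z \<in> (\<lambda>y. poly (cp u) y) ` T"
      then obtain y where y: "y \<in> T" "z = poly (cp u) y" by auto
      have "poly (cp (pcompose P u)) a = 0" using u rootP by (simp add: poly_pcompose)
      then have "poly (cp (pcompose P u)) y = 0" by (rule Xdvd) (use y in \<open>simp add: T_def\<close>)
      then have "poly (cp P) z = 0" using y by (simp add: poly_pcompose)
      moreover have "z \<in> M" using y sf_poly[OF Msf] by (simp add: T_def)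
      ultimately show "z \<in> R" by (simp add: R_def)
    qed
  qed
  have "card R = card T" using bij_betw_same_card[OF bij] .
  also have "card T = m" using card_roots_M by (simp add: T_def M_def)
  finally have "card R = m" .
  then show ?thesis
    unfolding root_capacity_def Let_def \<alpha>0_def[symmetric] L_def[symmetric] M_def[symmetric]
    by (simp add: R_def P_def)
qed


lemma hom_poly:
  assumes add: "\<forall>x\<in>Qa a. \<forall>y\<in>Qa a. \<phi> (x + y) = \<phi> x + \<phi> y \<and> \<phi> (x * y) = \<phi> x * \<phi> y"
    and rat: "\<forall>r. \<phi> (of_rat r) = of_rat r"
  shows "\<phi> (poly (cp p) a) = poly (cp p) (\<phi> a)"
proof (induction p)
  case 0
  then show ?case using rat[rule_format, of 0] by simp
next
  case (pCons r p)
  have "\<phi> (poly (cp (pCons r p)) a) = \<phi> (of_rat r + a * poly (cp p) a)" by simp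
  also have "\<dots> = \<phi> (of_rat r) + \<phi> (a * poly (cp p) a)"
    using add Qa_of_rat Qa_mult[OF Qa_gen Qa_poly] by blast
  also have "\<phi> (a * poly (cp p) a) = \<phi> a * \<phi> (poly (cp p) a)"
    using add Qa_gen Qa_poly by blast
  finally show ?case using pCons.IH rat by simp
qed

lemma iso_image:
  assumes "iso_over_Q (gen_field {a}) L'" and that: "L' \<subseteq> gen_field {a, \<zeta> ^ l}"
  shows "\<exists>j<m. L' = Qa (a * \<omega> ^ j)"
proof -
  obtain \<phi> where bij: "bij_betw \<phi> (Qa a) L'"
    and add: "\<forall>x\<in>Qa a. \<forall>y\<in>Qa a. \<phi> (x + y) = \<phi> x + \<phi> y \<and> \<phi> (x * y) = \<phi> x * \<phi> y"
    and rat: "\<forall>r. \<phi> (of_rat r) = of_rat r"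
    using assms by (auto simp: iso_over_Q_def L_eq)
  note hp = hom_poly[OF add rat]
  have img: "L' = Qa (\<phi> a)"
  proof -
    have "L' = \<phi> ` Qa a" using bij by (simp add: bij_betw_def)
    also have "\<dots> = Qa (\<phi> a)" unfolding Qa_def image_image by (simp add: hp)
    finally show ?thesis .
  qed
  have "\<phi> a ^ n = of_rat c"
  proof -
    have "\<phi> (poly (cp (monom 1 n)) a) = poly (cp (monom 1 n)) (\<phi> a)" by (rule hp)
    then have "\<phi> (a ^ n) = \<phi> a ^ n" by (simp add: poly_monom)
    then show ?thesis using af(1) rat by simp
  qed
  moreover have "\<phi> a \<in> gen_field {a, \<zeta> ^ l}" using that bij Qa_gen by (auto simp: bij_betw_def)
  ultimately have "\<phi> a \<in> (\<lambda>j. a * \<omega> ^ j) ` {..<m}" using roots_in_M by blast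
  then show ?thesis using img by auto
qed

lemma conj_iso: "iso_over_Q (gen_field {a}) (Qa (a * \<omega> ^ j))"
proof -
  define \<beta> where "\<beta> = a * \<omega> ^ j"
  have r\<beta>: "poly (cp X) \<beta> = 0" by (simp add: \<beta>_def rootX_iff conj_root)
  define \<phi> where "\<phi> x = poly (cp (SOME p. x = poly (cp p) a)) \<beta>" for x
  have key: "\<phi> (poly (cp p) a) = poly (cp p) \<beta>" for p
  proof -
    define p' where "p' = (SOME p'. poly (cp p) a = poly (cp p') a)"
    have "poly (cp p) a = poly (cp p') a" unfolding p'_def by (rule someI[of _ p]) simp
    then have "poly (cp (p' - p)) a = 0" by simp
    then have "X dvd (p' - p)" using irr_root_dvd[OF irrX af(3)] by blast
    then have "poly (cp (p' - p)) \<beta> = 0" using irr_root_dvd[OF irrX r\<beta>] by blast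
    then show ?thesis by (simp add: \<phi>_def p'_def)
  qed
  have bij: "bij_betw \<phi> (Qa a) (Qa \<beta>)"
  proof (rule bij_betw_imageI)
    show "inj_on \<phi> (Qa a)"
    proof (rule inj_onI)
      fix x y assume "x \<in> Qa a" "y \<in> Qa a" and e: "\<phi> x = \<phi> y"
      then obtain p q where xy: "x = poly (cp p) a" "y = poly (cp q) a" by (auto simp: Qa_def)
      then have "poly (cp (p - q)) \<beta> = 0" using e key by simp
      then have "X dvd (p - q)" using irr_root_dvd[OF irrX r\<beta>] by blast
      then have "poly (cp (p - q)) a = 0" using irr_root_dvd[OF irrX af(3)] by blast
      then show "x = y" using xy by simp
    qed
    show "\<phi> ` Qa a = Qa \<beta>" unfolding Qa_def image_image by (simp add: key)
  qed
  have hom: "\<forall>x\<in>Qa a. \<forall>y\<in>Qa a. \<phi> (x + y) = \<phi> x + \<phi> y \<and> \<phi> (x * y) = \<phi> x * \<phi> y"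
  proof (intro ballI)
    fix x y assume "x \<in> Qa a" "y \<in> Qa a"
    then obtain p q where xy: "x = poly (cp p) a" "y = poly (cp q) a" by (auto simp: Qa_def)
    have "\<phi> (x + y) = \<phi> (poly (cp (p + q)) a)" using xy by simp
    moreover have "\<phi> (x * y) = \<phi> (poly (cp (p * q)) a)" using xy by simp
    ultimately show "\<phi> (x + y) = \<phi> x + \<phi> y \<and> \<phi> (x * y) = \<phi> x * \<phi> y"
      using xy by (simp only: key) simp
  qed
  have rat: "\<forall>r. \<phi> (of_rat r) = of_rat r"
  proof
    fix r
    have "\<phi> (poly (cp [:r:]) a) = poly (cp [:r:]) \<beta>" by (rule key)
    then show "\<phi> (of_rat r) = of_rat r" by simp
  qed
  show ?thesis unfolding iso_over_Q_def L_eq \<beta>_def[symmetric] using bij hom rat by blast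
qed

lemma Ls_eq: "{L'. subfield_C L' \<and> L' \<subseteq> gen_field {a, \<zeta> ^ l} \<and> iso_over_Q (gen_field {a}) L'}
    = (\<lambda>j. Qa (a * \<omega> ^ j)) ` {..<m}"
proof
  show "{L'. subfield_C L' \<and> L' \<subseteq> gen_field {a, \<zeta> ^ l} \<and> iso_over_Q (gen_field {a}) L'}
      \<subseteq> (\<lambda>j. Qa (a * \<omega> ^ j)) ` {..<m}"
    using iso_image by blast
  show "(\<lambda>j. Qa (a * \<omega> ^ j)) ` {..<m}
      \<subseteq> {L'. subfield_C L' \<and> L' \<subseteq> gen_field {a, \<zeta> ^ l} \<and> iso_over_Q (gen_field {a}) L'}"
  proof
    fix L' assume "L' \<in> (\<lambda>j. Qa (a * \<omega> ^ j)) ` {..<m}"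
    then obtain j where L': "L' = Qa (a * \<omega> ^ j)" by auto
    have "L' \<subseteq> gen_field {a, \<zeta> ^ l}"
      unfolding L' gen_field_conj[symmetric] using conj_in_M M_subfield by (intro gen_field_least) auto
    then show "L' \<in> {L'. subfield_C L' \<and> L' \<subseteq> gen_field {a, \<zeta> ^ l} \<and> iso_over_Q (gen_field {a}) L'}"
      using L' Qa_conj_subfield conj_iso by auto
  qed
qed


definition V0 where "V0 = Q.span ((\<lambda>i. a ^ (m * i)) ` {..<l})"

lemma V0_sub: "j < m \<Longrightarrow> V0 \<subseteq> Qa (a * \<omega> ^ j)"
proof -
  assume j: "j < m"
  show ?thesis unfolding V0_def
  proof (rule sf_span[OF Qa_conj_subfield])
    show "(\<lambda>i. a ^ (m * i)) ` {..<l} \<subseteq> Qa (a * \<omega> ^ j)"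
    proof
      fix x assume "x \<in> (\<lambda>i. a ^ (m * i)) ` {..<l}"
      then obtain i where x: "x = a ^ (m * i)" by auto
      have "(\<omega> ^ j) ^ (m * i) = (\<omega> ^ m) ^ (j * i)" by (simp flip: power_mult) (simp add: mult_ac)
      then have "(a * \<omega> ^ j) ^ (m * i) = x" using wm x by (simp add: power_mult_distrib)
      then show "x \<in> Qa (a * \<omega> ^ j)" using Qa_power by metis
    qed
  qed
qed

lemma rat_root_unity: "(of_rat \<rho> :: complex) ^ m = 1 \<Longrightarrow> \<rho> = 1"
proof -
  assume h: "(of_rat \<rho> :: complex) ^ m = 1"
  then have r: "\<rho> ^ m = 1" by (metis of_rat_1 of_rat_eq_iff of_rat_power)
  then have "\<bar>\<rho> ^ m\<bar> = 1" by simp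
  then have "\<bar>\<rho>\<bar> ^ m = 1 ^ m" by (simp add: power_abs)
  then have "\<bar>\<rho>\<bar> = 1" using m0 by (intro power_eq_imp_eq_base[of "\<bar>\<rho>\<bar>" m 1]) auto
  then have "\<rho> = 1 \<or> \<rho> = -1" by linarith
  moreover have "\<rho> \<noteq> -1"
  proof
    assume "\<rho> = -1"
    then have "(-1 :: rat) ^ m = 1" using r by simp
    then show False using m_odd by simp
  qed
  ultimately show ?thesis by blast
qed

lemma inter_sub_V0:
  assumes x: "\<And>j. j < m \<Longrightarrow> x \<in> Qa (a * \<omega> ^ j)"
  shows "x \<in> V0"
proof -
  have xa: "x \<in> Qa a" using x[of 0] m0 by simp
  obtain q where q: "x = (\<Sum>i<n. of_rat (q i) * a ^ i)" using Qa_a_coeffs[OF xa af(1)] by blast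
  have mi: "m dvd i" if i: "i < n" "q i \<noteq> 0" for i
  proof (cases "m = 1")
    case True then show ?thesis by simp
  next
    case False
    then have m1: "1 < m" using m0 by simp
    have xb: "x \<in> Qa (a * \<omega>)" using x[of 1] m1 by simp
    obtain r where r: "x = (\<Sum>i<n. of_rat (r i) * (a * \<omega>) ^ i)"
      using Qa_a_coeffs[OF xb] conj_root[of 1] by auto
    define f where "f = (\<lambda>i. of_rat (q i) - of_rat (r i) * \<omega> ^ i)"
    have fF: "f i \<in> Qa \<zeta>" if "i < n" for i
      unfolding f_def \<omega>_def
      by (intro Qa_diff Qa_mult Qa_of_rat) (simp add: power_mult[symmetric] Qa_power)
    have "(\<Sum>i<n. f i * a ^ i) = (\<Sum>i<n. of_rat (q i) * a ^ i) - (\<Sum>i<n. of_rat (r i) * (a * \<omega>) ^ i)"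
      by (simp add: f_def algebra_simps sum_subtractf power_mult_distrib)
    then have "(\<Sum>i<n. f i * a ^ i) = 0" using q r by simp
    then have "\<forall>i<n. f i = 0" using kummer[OF zn prim odd c0 irr a_def, of f, OF fF] by blast
    then have e: "of_rat (q i) = of_rat (r i) * \<omega> ^ i" using i(1) by (simp add: f_def)
    then have ri: "r i \<noteq> 0" using i(2) by auto
    define \<rho> where "\<rho> = q i / r i"
    have "\<omega> ^ i = of_rat \<rho>" using e ri by (simp add: \<rho>_def of_rat_divide field_simps)
    moreover have "(\<omega> ^ i) ^ m = 1"
    proof -
      have "(\<omega> ^ i) ^ m = (\<omega> ^ m) ^ i" by (simp only: power_mult[symmetric] mult.commute)
      then show ?thesis using wm by simp
    qed
    ultimately have "\<rho> = 1" using rat_root_unity by simp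
    then have "\<zeta> ^ (l * i) = 1" using \<open>\<omega> ^ i = of_rat \<rho>\<close> by (simp add: \<omega>_def power_mult)
    then have "n dvd l * i" using prim_root_pow_eq_1[OF zn prim n0] by simp
    then have "l * m dvd l * i" using nlm by simp
    then show ?thesis using l0 by simp
  qed
  show ?thesis
    unfolding q V0_def
  proof (rule Q.span_sum)
    fix i assume i: "i \<in> {..<n}"
    show "of_rat (q i) * a ^ i \<in> Q.span ((\<lambda>i. a ^ (m * i)) ` {..<l})"
    proof (cases "q i = 0")
      case True then show ?thesis by (simp add: Q.span_zero)
    next
      case False
      then obtain i' where i': "i = m * i'" using mi i by (auto elim: dvdE)
      have "m * i' < m * l" using i i' nlm by (simp add: mult.commute)
      then have "i' < l" by simp
      then have "a ^ i \<in> (\<lambda>i. a ^ (m * i)) ` {..<l}" using i' by auto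
      then show ?thesis by (intro Q.span_scale Q.span_base)
    qed
  qed
qed

lemma ext_degree_V0: "ext_degree V0 = l"
proof -
  define B where "B = (\<lambda>i. a ^ (m * i)) ` {..<l}"
  have inj: "inj_on (\<lambda>i. a ^ i) {..<n}" using irr_powers_indep(1)[OF irrX af(3)] af(4) by simp
  have ind: "Q.independent ((\<lambda>i. a ^ i) ` {..<n})" using irr_powers_indep(2)[OF irrX af(3)] af(4) by simp
  have Bsub: "B \<subseteq> (\<lambda>i. a ^ i) ` {..<n}"
  proof
    fix x assume "x \<in> B"
    then obtain i where "i < l" "x = a ^ (m * i)" by (auto simp: B_def)
    moreover have "m * i < m * l" using \<open>i < l\<close> m0 by simp
    ultimately show "x \<in> (\<lambda>i. a ^ i) ` {..<n}" using nlm by (auto simp: mult.commute)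
  qed
  have injB: "inj_on (\<lambda>i. a ^ (m * i)) {..<l}"
  proof (rule inj_onI)
    fix i j assume ij: "i \<in> {..<l}" "j \<in> {..<l}" "a ^ (m * i) = a ^ (m * j)"
    have "m * i < m * l" "m * j < m * l" using ij m0 by auto
    then have "m * i \<in> {..<n}" "m * j \<in> {..<n}" using nlm by (auto simp: mult.commute)
    then have "m * i = m * j" using inj ij(3) by (auto dest: inj_onD)
    then show "i = j" using m0 by simp
  qed
  have indB: "Q.independent B" using Q.independent_mono[OF ind Bsub] .
  have "ext_degree V0 = card B"
    unfolding V0_def B_def[symmetric]
    by (rule ext_degree_eq[OF _ Q.span_superset order.refl indB]) (simp add: B_def)
  also have "card B = l" using injB by (simp add: B_def card_image)
  finally show ?thesis .
qed

lemma intersection_eq: "intersection_indicium (gen_field {a, \<zeta> ^ l}) (gen_field {a}) = l"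
proof -
  let ?Ls = "{L'. subfield_C L' \<and> L' \<subseteq> gen_field {a, \<zeta> ^ l} \<and> iso_over_Q (gen_field {a}) L'}"
  have Ls: "?Ls = (\<lambda>j. Qa (a * \<omega> ^ j)) ` {..<m}" by (rule Ls_eq)
  have ne: "?Ls \<noteq> {}" using Ls m0 by auto
  have "\<Inter> ?Ls = V0"
  proof
    show "\<Inter> ?Ls \<subseteq> V0" unfolding Ls using inter_sub_V0 by blast
    show "V0 \<subseteq> \<Inter> ?Ls" unfolding Ls using V0_sub by blast
  qed
  then show ?thesis unfolding intersection_indicium_def Let_def if_not_P[OF ne] using ext_degree_V0 by simp
qed

end

theorem mainTheorem15:
  fixes n l :: nat and \<zeta> :: complex and c :: rat
  assumes "odd n" and "n > 2"
    and "\<zeta> ^ n = 1" and "\<forall>k. 0 < k \<and> k < n \<longrightarrow> \<zeta> ^ k \<noteq> 1"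
    and "c > 0"
    and "irreducible (monom 1 n - [:c:])"
    and "l > 0" and "l dvd n"
  defines "a \<equiv> complex_of_real (root n (of_rat c))"
  defines "L \<equiv> gen_field {a}"
  defines "M \<equiv> gen_field {a, \<zeta> ^ l}"
  shows "root_capacity M L = n div l \<and> intersection_indicium M L = l \<and>
         intersection_indicium M L * root_capacity M L = ext_degree L"
proof -
  interpret kset n l \<zeta> c a
    by unfold_locales (use assms in \<open>simp_all add: a_def\<close>)
  have rc: "root_capacity M L = n div l" using root_capacity_eq by (simp add: M_def L_def m_def)
  have ii: "intersection_indicium M L = l" using intersection_eq by (simp add: M_def L_def)
  have ed: "ext_degree L = n" using ext_degree_L by (simp add: L_def)
  have "l * (n div l) = n" using nlm by (simp add: m_def)
  then show ?thesis using rc ii ed by simp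
qed

end
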